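(* Let $A\in\mathbb{R}^{d\times d}$ and let $E$ be a linear subspace of $\mathbb{R}^d$. Consider the ODE $\dot x(t)=Ax(t)$, $x(0)\in\mathbb{R}^d$. Then the following statements are equivalent: (1) $E$ is invariant under $A$ (i.e. $x\in E\Rightarrow Ax\in E$), and $E\supseteq E_{A,\ge0}$, where $E_{A,\ge 0}$ denotes the linear subspace spanned by all generalized eigenvectors associated with eigenvalues of $A$ whose real parts are greater than or equal to zero. (2) There exists a seminorm $p$ with $\ker(p)=E$ such that the ODE is globally exponentially stable with respect to $p$. (3) For any seminorm $p$ with $\ker(p)=E$, the ODE is globally exponentially stable with respect to $p$. (4) There exists a pair $P,Q\in\mathcal{S}^d_{+,E}$ satisfying $A^\top P+PA+Q=0$. (5) For any $Q\in\mathcal{S}^d_{+,E}$, there exists a unique $P\in\mathcal{S}^d_{+,E}$ satisfying $A^\top P+PA+Q=0$. Consequently, the smallest subspace $E$ for which any of these statements holds is $E=E_{A,\ge0}$.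
   Context: A seminorm on $\mathbb{R}^d$ is a function $p:\mathbb{R}^d\to[0,\infty)$ that is absolutely homogeneous and satisfies the triangle inequality; $\ker(p)=\{x:p(x)=0\}$. The ODE $\dot x=Ax$ is globally exponentially stable with respect to a seminorm $p$ if there exist constants $\alpha,\beta>0$ such that $p(x(t))\le \alpha\, p(x(0))e^{-\beta t}$ for all $t\ge 0$ and every initialization $x(0)\in\mathbb{R}^d$. $\mathcal{S}^d_{+,E}$ denotes the set of symmetric positive semi-definite $d\times d$ matrices whose kernel is exactly $E$. *)

theory Defs
  imports "HOL-Analysis.Analysis"
begin

text \<open>Seminorm on R^d: nonnegative, absolutely homogeneous, triangle inequality.\<close>
definition seminorm :: "(real^'n \<Rightarrow> real) \<Rightarrow> bool" where
  "seminorm p \<longleftrightarrow> (\<forall>x. 0 \<le> p x) \<and> (\<forall>c x. p (c *\<^sub>R x) = \<bar>c\<bar> * p x)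
     \<and> (\<forall>x y. p (x + y) \<le> p x + p y)"

definition seminorm_ker :: "(real^'n \<Rightarrow> real) \<Rightarrow> (real^'n) set" where
  "seminorm_ker p = {x. p x = 0}"

text \<open>Global exponential stability of x' = A x w.r.t. p: every solution on [0,oo)
  (i.e. for every initialization x(0)) satisfies the exponential bound.\<close>
definition ges_wrt :: "real^'n^'n \<Rightarrow> (real^'n \<Rightarrow> real) \<Rightarrow> bool" where
  "ges_wrt A p \<longleftrightarrow> (\<exists>\<alpha> \<beta>. \<alpha> > 0 \<and> \<beta> > 0 \<and>
     (\<forall>x :: real \<Rightarrow> real^'n.
        (\<forall>t\<ge>0. (x has_vector_derivative (A *v x t)) (at t within {0..})) \<longrightarrow>
        (\<forall>t\<ge>0. p (x t) \<le> \<alpha> * p (x 0) * exp (- \<beta> * t))))"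

text \<open>S^d_{+,E}: symmetric positive semidefinite matrices with kernel exactly E.\<close>
definition psd_ker :: "(real^'n) set \<Rightarrow> (real^'n^'n) set" where
  "psd_ker E = {P. transpose P = P \<and> (\<forall>x. 0 \<le> x \<bullet> (P *v x)) \<and> {x. P *v x = 0} = E}"

definition cmat :: "real^'n^'n \<Rightarrow> complex^'n^'n" where
  "cmat A = (\<chi> i j. complex_of_real (A $ i $ j))"

definition cvec :: "real^'n \<Rightarrow> complex^'n" where
  "cvec x = (\<chi> i. complex_of_real (x $ i))"

text \<open>Generalized eigenvector v (over C) of A for eigenvalue mu.\<close>
definition gen_eigvec :: "real^'n^'n \<Rightarrow> complex \<Rightarrow> complex^'n \<Rightarrow> bool" where
  "gen_eigvec A \<mu> v \<longleftrightarrow> v \<noteq> 0 \<and>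
     (\<exists>k::nat. ((\<lambda>w. cmat A *v w - \<mu> *s w) ^^ k) v = 0)"

text \<open>E_{A,>=0}: the real subspace spanned by the generalized eigenvectors of A
  for eigenvalues with nonnegative real part (real vectors in their complex span).\<close>
definition E_ge0 :: "real^'n^'n \<Rightarrow> (real^'n) set" where
  "E_ge0 A = {x. cvec x \<in> vec.span {v. \<exists>\<mu>. Re \<mu> \<ge> 0 \<and> gen_eigvec A \<mu> v}}"

text \<open>The five statements of the theorem, for a matrix A and a subspace E.\<close>
definition stmt1 :: "real^'n^'n \<Rightarrow> (real^'n) set \<Rightarrow> bool" where
  "stmt1 A E \<longleftrightarrow> (\<forall>x\<in>E. A *v x \<in> E) \<and> E_ge0 A \<subseteq> E"
definition stmt2 :: "real^'n^'n \<Rightarrow> (real^'n) set \<Rightarrow> bool" where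
  "stmt2 A E \<longleftrightarrow> (\<exists>p. seminorm p \<and> seminorm_ker p = E \<and> ges_wrt A p)"
definition stmt3 :: "real^'n^'n \<Rightarrow> (real^'n) set \<Rightarrow> bool" where
  "stmt3 A E \<longleftrightarrow> (\<forall>p. seminorm p \<and> seminorm_ker p = E \<longrightarrow> ges_wrt A p)"
definition stmt4 :: "real^'n^'n \<Rightarrow> (real^'n) set \<Rightarrow> bool" where
  "stmt4 A E \<longleftrightarrow> (\<exists>P Q. P \<in> psd_ker E \<and> Q \<in> psd_ker E \<and> transpose A ** P + P ** A + Q = 0)"
definition stmt5 :: "real^'n^'n \<Rightarrow> (real^'n) set \<Rightarrow> bool" where
  "stmt5 A E \<longleftrightarrow> (\<forall>Q\<in>psd_ker E. \<exists>!P. P \<in> psd_ker E \<and> transpose A ** P + P ** A + Q = 0)"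

end

theory Submission
  imports Defs "HOL-Computational_Algebra.Fundamental_Theorem_Algebra"
begin
definition fm :: "complex^'n^'n \<Rightarrow> complex \<Rightarrow> complex^'n \<Rightarrow> complex^'n" where
  "fm B \<mu> w = B *v w - \<mu> *s w"

definition GE :: "complex^'n^'n \<Rightarrow> complex \<Rightarrow> (complex^'n) set" where
  "GE B \<mu> = {v. \<exists>k. (fm B \<mu> ^^ k) v = 0}"

definition GEall :: "complex^'n^'n \<Rightarrow> (complex^'n) set" where
  "GEall B = {v. \<exists>\<mu>. v \<in> GE B \<mu>}"

lemma fm_add: "fm B \<mu> (x + y) = fm B \<mu> x + fm B \<mu> y"
  by (simp add: fm_def matrix_vector_right_distrib)

lemma fm_scale: "fm B \<mu> (c *s x) = c *s fm B \<mu> x"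
  by (simp add: fm_def vector_scalar_commute mult.commute)

lemma fm_zero[simp]: "fm B \<mu> 0 = 0"
  by (simp add: fm_def)

lemma fm_diff: "fm B \<mu> (x - y) = fm B \<mu> x - fm B \<mu> y"
  using fm_add[of B \<mu> "x - y" y] by simp

lemma fm_sum: "fm B \<mu> (\<Sum>i\<in>S. f i) = (\<Sum>i\<in>S. fm B \<mu> (f i))"
  by (induction S rule: infinite_finite_induct) (auto simp: fm_add)

lemma fmk_add: "(fm B \<mu> ^^ k) (x + y) = (fm B \<mu> ^^ k) x + (fm B \<mu> ^^ k) y"
  by (induction k) (auto simp: fm_add)

lemma fmk_scale: "(fm B \<mu> ^^ k) (c *s x) = c *s (fm B \<mu> ^^ k) x"
  by (induction k) (auto simp: fm_scale)

lemma fmk_zero[simp]: "(fm B \<mu> ^^ k) 0 = 0"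
  by (induction k) auto

lemma fmk_diff: "(fm B \<mu> ^^ k) (x - y) = (fm B \<mu> ^^ k) x - (fm B \<mu> ^^ k) y"
  using fmk_add[of k B \<mu> "x - y" y] by simp

lemma fmk_sum: "(fm B \<mu> ^^ k) (\<Sum>i\<in>S. f i) = (\<Sum>i\<in>S. (fm B \<mu> ^^ k) (f i))"
  by (induction S rule: infinite_finite_induct) (auto simp: fmk_add)

lemma fm_comm: "fm B la (fm B \<mu> w) = fm B \<mu> (fm B la w)"
  by (simp add: fm_def matrix_vector_mult_diff_distrib vector_scalar_commute
      vector_ssub_ldistrib vector_smult_assoc algebra_simps)

lemma fmk_comm: "fm B la ((fm B \<mu> ^^ k) w) = (fm B \<mu> ^^ k) (fm B la w)"
  by (induction k) (auto simp: fm_comm)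

lemma fm_shift: "fm B la w = fm B \<mu> w + (\<mu> - la) *s w"
  by (simp add: fm_def algebra_simps vector_sadd_rdistrib vector_ssub_ldistrib)

lemma fmk_mono: "(fm B \<mu> ^^ k) v = 0 \<Longrightarrow> k \<le> m \<Longrightarrow> (fm B \<mu> ^^ m) v = 0"
proof -
  assume a: "(fm B \<mu> ^^ k) v = 0" "k \<le> m"
  then obtain d where "m = d + k" by (metis le_add_diff_inverse2)
  then show ?thesis using a by (simp add: funpow_add)
qed

lemma GE_subspace: "vec.subspace (GE B \<mu>)"
  unfolding vec.subspace_def GE_def
proof (intro conjI ballI allI; clarsimp)
  fix x y k l assume "(fm B \<mu> ^^ k) x = 0" "(fm B \<mu> ^^ l) y = 0"
  then have "(fm B \<mu> ^^ (max k l)) x = 0" "(fm B \<mu> ^^ (max k l)) y = 0"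
    using fmk_mono by (metis max.cobounded1, metis max.cobounded2)
  then show "\<exists>k. (fm B \<mu> ^^ k) (x + y) = 0" by (intro exI[of _ "max k l"]) (simp add: fmk_add)
next
  fix c x k assume "(fm B \<mu> ^^ k) x = 0"
  then show "\<exists>k. (fm B \<mu> ^^ k) (c *s x) = 0" by (auto simp: fmk_scale)
qed

lemma GE_fm: "v \<in> GE B \<mu> \<Longrightarrow> fm B la v \<in> GE B \<mu>"
  unfolding GE_def by (clarsimp simp: fmk_comm[symmetric]) (metis fm_zero)

lemma GE_fmk: "v \<in> GE B \<mu> \<Longrightarrow> (fm B \<mu> ^^ j) v \<in> GE B \<mu>"
  by (induction j) (auto simp: GE_fm)

lemma GE_span: "v \<in> GE B \<mu> \<Longrightarrow> v \<in> vec.span (GEall B)"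
  by (rule vec.span_base) (auto simp: GEall_def)

lemma GE_invert:
  assumes g: "g \<in> GE B \<mu>" and ne: "\<mu> \<noteq> la"
  shows "\<exists>h\<in>GE B \<mu>. fm B la h = g"
proof -
  obtain K where K: "(fm B \<mu> ^^ K) g = 0" using g by (auto simp: GE_def)
  define c where "c = \<mu> - la"
  have c0: "c \<noteq> 0" using ne by (simp add: c_def)
  define T where "T j = ((-1)^j / c^j) *s (fm B \<mu> ^^ j) g" for j
  define h where "h = (\<Sum>j<K. ((-1)^j / c^(Suc j)) *s (fm B \<mu> ^^ j) g)"
  have hGE: "h \<in> GE B \<mu>"
    unfolding h_def
    by (rule vec.subspace_sum[OF GE_subspace]) (auto intro!: vec.subspace_scale[OF GE_subspace] GE_fmk g)
  have trm: "fm B la (((-1)^j / c^(Suc j)) *s (fm B \<mu> ^^ j) g) = T j - T (Suc j)" for j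
  proof -
    have "fm B la (((-1)^j / c^(Suc j)) *s (fm B \<mu> ^^ j) g)
        = ((-1)^j / c^(Suc j)) *s ((fm B \<mu> ^^ (Suc j)) g + c *s (fm B \<mu> ^^ j) g)"
      by (simp add: fm_scale fm_shift[of B la _ \<mu>] c_def)
    also have "\<dots> = ((-1)^j / c^(Suc j)) *s (fm B \<mu> ^^ (Suc j)) g + ((-1)^j / c^j) *s (fm B \<mu> ^^ j) g"
      using c0 by (simp add: vector_add_ldistrib vector_smult_assoc)
    also have "\<dots> = T j - T (Suc j)"
      by (simp add: T_def vector_smult_assoc)
    finally show ?thesis .
  qed
  have "fm B la h = (\<Sum>j<K. T j - T (Suc j))"
    unfolding h_def fm_sum trm by simp
  also have "\<dots> = T 0 - T K" by (rule sum_lessThan_telescope')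
  also have "\<dots> = g" by (simp add: T_def K)
  finally show ?thesis using hGE by blast
qed

lemma GE_split:
  assumes "w \<in> vec.span (GEall B)"
  shows "\<exists>h\<in>vec.span (GEall B). fm B la h - w \<in> GE B la"
proof -
  let ?P = "\<lambda>w. \<exists>h\<in>vec.span (GEall B). fm B la h - w \<in> GE B la"
  have sub: "vec.subspace (Collect ?P)"
    unfolding vec.subspace_def
  proof (intro conjI ballI allI; clarsimp)
    show "\<exists>h\<in>vec.span (GEall B). fm B la h \<in> GE B la"
      by (rule bexI[of _ 0]) (auto simp: vec.span_zero vec.subspace_0[OF GE_subspace])
  next
    fix x y hx hy assume hx: "hx \<in> vec.span (GEall B)" "fm B la hx - x \<in> GE B la"
      and hy: "hy \<in> vec.span (GEall B)" "fm B la hy - y \<in> GE B la"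
    have "fm B la (hx + hy) - (x + y) = (fm B la hx - x) + (fm B la hy - y)"
      by (simp add: fm_add)
    then show "\<exists>h\<in>vec.span (GEall B). fm B la h - (x + y) \<in> GE B la"
      using hx hy vec.subspace_add[OF GE_subspace] vec.span_add by metis
  next
    fix c x hx assume hx: "hx \<in> vec.span (GEall B)" "fm B la hx - x \<in> GE B la"
    have "fm B la (c *s hx) - c *s x = c *s (fm B la hx - x)"
      by (simp add: fm_scale vector_ssub_ldistrib)
    then show "\<exists>h\<in>vec.span (GEall B). fm B la h - c *s x \<in> GE B la"
      using hx vec.subspace_scale[OF GE_subspace] vec.span_scale by metis
  qed
  have base: "?P w" if wG: "w \<in> GEall B" for w
  proof -
    obtain \<mu> where w: "w \<in> GE B \<mu>" using wG unfolding GEall_def by blast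
    show ?thesis
    proof (cases "\<mu> = la")
      case True
      then show ?thesis using w vec.subspace_neg[OF GE_subspace]
        by (intro bexI[of _ 0]) (auto simp: vec.span_zero)
    next
      case False
      then obtain h where "h \<in> GE B \<mu>" "fm B la h = w" using GE_invert w by blast
      then show ?thesis using GE_span vec.subspace_0[OF GE_subspace] by (intro bexI[of _ h]) auto
    qed
  qed
  show ?thesis using vec.span_induct[OF assms sub] base by blast
qed

lemma GE_preimage:
  assumes "fm B la v \<in> vec.span (GEall B)"
  shows "v \<in> vec.span (GEall B)"
proof -
  obtain h where h: "h \<in> vec.span (GEall B)" "fm B la h - fm B la v \<in> GE B la"
    using GE_split[OF assms] by blast
  have "fm B la (v - h) \<in> GE B la"
    using vec.subspace_neg[OF GE_subspace h(2)] by (simp add: fm_diff)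
  then obtain k where "(fm B la ^^ k) (fm B la (v - h)) = 0" by (auto simp: GE_def)
  then have "(fm B la ^^ (Suc k)) (v - h) = 0" by (simp only: funpow_Suc_right o_apply)
  then have "v - h \<in> GE B la" unfolding GE_def by blast
  then have "v - h \<in> vec.span (GEall B)" by (rule GE_span)
  then have "(v - h) + h \<in> vec.span (GEall B)" using h(1) vec.span_add by blast
  then show ?thesis by simp
qed

definition Bp :: "complex^'n^'n \<Rightarrow> nat \<Rightarrow> complex^'n \<Rightarrow> complex^'n" where
  "Bp B j v = ((\<lambda>w. B *v w) ^^ j) v"

definition opoly :: "complex^'n^'n \<Rightarrow> complex poly \<Rightarrow> complex^'n \<Rightarrow> complex^'n" where
  "opoly B p v = (\<Sum>j\<le>degree p. coeff p j *s Bp B j v)"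

lemma Bp_0[simp]: "Bp B 0 v = v" by (simp add: Bp_def)
lemma Bp_Suc: "Bp B (Suc j) v = B *v Bp B j v" by (simp add: Bp_def)

lemma Bp_fm: "Bp B j (fm B la v) = fm B la (Bp B j v)"
proof (induction j)
  case 0 then show ?case by simp
next
  case (Suc j)
  have "B *v fm B la w = fm B la (B *v w)" for w
    by (simp add: fm_def matrix_vector_mult_diff_distrib vector_scalar_commute matrix_vector_mul_assoc)
  then show ?case using Suc by (simp add: Bp_Suc)
qed

lemma opoly_bound:
  assumes "degree p \<le> n"
  shows "opoly B p v = (\<Sum>j\<le>n. coeff p j *s Bp B j v)"
  unfolding opoly_def
  by (rule sum.mono_neutral_left) (use assms in \<open>auto simp: coeff_eq_0\<close>)

lemma opoly_add: "opoly B (p + q) v = opoly B p v + opoly B q v"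
proof -
  let ?n = "max (degree p) (degree q)"
  have "degree (p + q) \<le> ?n" by (rule degree_add_le) auto
  then show ?thesis
    by (simp add: opoly_bound[of _ ?n] vector_sadd_rdistrib sum.distrib)
qed

lemma opoly_smult: "opoly B (smult c p) v = c *s opoly B p v"
proof -
  have "degree (smult c p) \<le> degree p" by (rule degree_smult_le)
  then show ?thesis
    by (simp add: opoly_bound[of _ "degree p"] vec.scale_sum_right vector_smult_assoc)
qed

lemma opoly_zero[simp]: "opoly B 0 v = 0"
  by (simp add: opoly_def)

lemma opoly_diff: "opoly B (p - q) v = opoly B p v - opoly B q v"
  using opoly_add[of B "p - q" q v] by simp

lemma opoly_sum: "opoly B (\<Sum>i\<in>S. f i) v = (\<Sum>i\<in>S. opoly B (f i) v)"
  by (induction S rule: infinite_finite_induct) (auto simp: opoly_add)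

lemma opoly_monom: "opoly B (monom c j) v = c *s Bp B j v"
proof -
  have "opoly B (monom c j) v = (\<Sum>i\<le>j. coeff (monom c j) i *s Bp B i v)"
    by (rule opoly_bound) (rule degree_monom_le)
  also have "\<dots> = (\<Sum>i\<le>j. (if j = i then c *s Bp B i v else 0))"
    by (rule sum.cong) (auto simp: coeff_monom)
  also have "\<dots> = c *s Bp B j v" by simp
  finally show ?thesis .
qed

lemma opoly_const: "opoly B [:c:] v = c *s v"
  by (simp add: opoly_def)

lemma opoly_pCons0: "opoly B (pCons 0 q) v = B *v opoly B q v"
proof -
  have "opoly B (pCons 0 q) v = (\<Sum>j\<le>Suc (degree q). coeff (pCons 0 q) j *s Bp B j v)"
    by (rule opoly_bound) (rule degree_pCons_le)
  also have "\<dots> = (\<Sum>j\<le>degree q. coeff q j *s Bp B (Suc j) v)"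
    by (subst sum.atMost_Suc_shift) simp
  also have "\<dots> = B *v opoly B q v"
    by (simp add: opoly_def vec.sum Bp_Suc vector_scalar_commute)
  finally show ?thesis .
qed

lemma opoly_fm: "opoly B q (fm B la v) = fm B la (opoly B q v)"
  by (simp add: opoly_def fm_sum fm_scale Bp_fm)

lemma opoly_linfactor: "opoly B ([:-a, 1:] * q) v = opoly B q (fm B a v)"
proof -
  have "[:-a, 1:] * q = pCons 0 q - smult a q" by simp
  then have "opoly B ([:-a, 1:] * q) v = B *v opoly B q v - a *s opoly B q v"
    by (simp only: opoly_diff opoly_smult opoly_pCons0)
  also have "\<dots> = fm B a (opoly B q v)" by (simp add: fm_def)
  finally show ?thesis by (simp add: opoly_fm)
qed

lemma opoly_span:
  assumes "p \<noteq> 0" "opoly B p v = 0"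
  shows "v \<in> vec.span (GEall B)"
  using assms
proof (induction "degree p" arbitrary: p v rule: less_induct)
  case less
  show ?case
  proof (cases "degree p = 0")
    case True
    then obtain c where p: "p = [:c:]" by (rule degree_eq_zeroE)
    with less.prems have "c \<noteq> 0" "c *s v = 0" by (auto simp: opoly_const)
    then have "v = 0" by (metis vec.scale_eq_0_iff)
    then show ?thesis by (simp add: vec.span_zero)
  next
    case False
    then obtain z where "poly p z = 0"
      using fundamental_theorem_of_algebra[of p] constant_degree[of p] by auto
    then obtain q where pq: "p = [:-z, 1:] * q" using poly_eq_0_iff_dvd by (metis dvdE)
    have q0: "q \<noteq> 0" using less.prems(1) pq by (metis mult_zero_right)
    have d1: "degree [:-z, 1::complex:] = 1" by simp
    have "degree p = degree q + 1" unfolding pq using q0 d1 degree_mult_eq[of "[:-z, 1::complex:]" q] by simp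
    then have dq: "degree q < degree p" by simp
    have "opoly B q (fm B z v) = 0" using less.prems(2) unfolding pq opoly_linfactor .
    then have "fm B z v \<in> vec.span (GEall B)" using less.hyps[OF dq q0] by blast
    then show ?thesis by (rule GE_preimage)
  qed
qed

lemma annihilating_poly: "\<exists>p. p \<noteq> 0 \<and> opoly B p (v :: complex^'n) = 0"
proof (cases "inj_on (\<lambda>j. Bp B j v) {..CARD('n)}")
  case False
  then obtain i j where ij: "i \<noteq> j" "Bp B i v = Bp B j v" unfolding inj_on_def by blast
  let ?p = "monom 1 i - monom 1 j :: complex poly"
  have c1: "coeff ?p i = 1" using ij by (simp add: coeff_monom)
  have "?p \<noteq> 0" proof assume "?p = 0" then show False using c1 by simp qed
  moreover have "opoly B ?p v = 0" using ij by (simp add: opoly_diff opoly_monom)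
  ultimately show ?thesis by blast
next
  case True
  let ?S = "(\<lambda>j. Bp B j v) ` {..CARD('n)}"
  have cS: "card ?S = Suc CARD('n)" using True by (simp add: card_image)
  have "vec.dependent ?S"
  proof (rule ccontr)
    assume "\<not> vec.dependent ?S"
    then have "card ?S \<le> vec.dim ?S" using vec.independent_bound_general by blast
    also have "\<dots> \<le> vec.dim (UNIV :: (complex^'n) set)" by (rule vec.dim_subset) simp
    also have "\<dots> = CARD('n)" by (rule vec_dim_card)
    finally show False using cS by simp
  qed
  then obtain u where u: "\<exists>s\<in>?S. u s \<noteq> 0" "(\<Sum>s\<in>?S. u s *s s) = 0"
    using vec.dependent_finite[of ?S] by auto
  let ?p = "\<Sum>j\<le>CARD('n). monom (u (Bp B j v)) j"
  obtain j0 where j0: "j0 \<le> CARD('n)" "u (Bp B j0 v) \<noteq> 0" using u(1) by auto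
  have "coeff ?p j0 = u (Bp B j0 v)" using j0(1) by (rule coeff_sum_monom)
  then have "?p \<noteq> 0" using j0 by auto
  moreover have "opoly B ?p v = (\<Sum>j\<le>CARD('n). u (Bp B j v) *s Bp B j v)"
    by (simp add: opoly_sum opoly_monom)
  moreover have "\<dots> = (\<Sum>s\<in>?S. u s *s s)"
    using True by (simp add: sum.reindex)
  ultimately show ?thesis using u(2) by metis
qed

lemma GEall_span_UNIV: "v \<in> vec.span (GEall B)"
  using annihilating_poly[of B v] opoly_span by blast

definition rvec :: "complex^'n \<Rightarrow> real^'n" where "rvec z = (\<chi> i. Re (z$i))"
definition ivec :: "complex^'n \<Rightarrow> real^'n" where "ivec z = (\<chi> i. Im (z$i))"
definition cconj :: "complex^'n \<Rightarrow> complex^'n" where "cconj z = (\<chi> i. cnj (z$i))"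

lemma rvec_cvec[simp]: "rvec (cvec x) = x" by (simp add: rvec_def cvec_def)
lemma ivec_cvec[simp]: "ivec (cvec x) = 0" by (simp add: ivec_def cvec_def vec_eq_iff)
lemma rvec_add: "rvec (z + w) = rvec z + rvec w" by (simp add: rvec_def vec_eq_iff)
lemma ivec_add: "ivec (z + w) = ivec z + ivec w" by (simp add: ivec_def vec_eq_iff)
lemma rvec_diff: "rvec (z - w) = rvec z - rvec w" by (simp add: rvec_def vec_eq_iff)
lemma ivec_diff: "ivec (z - w) = ivec z - ivec w" by (simp add: ivec_def vec_eq_iff)
lemma rvec_zero[simp]: "rvec 0 = 0" by (simp add: rvec_def vec_eq_iff)
lemma ivec_zero[simp]: "ivec 0 = 0" by (simp add: ivec_def vec_eq_iff)
lemma rvec_scaleR: "rvec (r *\<^sub>R z) = r *\<^sub>R rvec z" by (simp add: rvec_def vec_eq_iff)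
lemma ivec_scaleR: "ivec (r *\<^sub>R z) = r *\<^sub>R ivec z" by (simp add: ivec_def vec_eq_iff)
lemma rvec_smult: "rvec (c *s z) = Re c *\<^sub>R rvec z - Im c *\<^sub>R ivec z"
  by (simp add: rvec_def ivec_def vec_eq_iff)
lemma ivec_smult: "ivec (c *s z) = Im c *\<^sub>R rvec z + Re c *\<^sub>R ivec z"
  by (simp add: rvec_def ivec_def vec_eq_iff)
lemma cvec_add: "cvec (x + y) = cvec x + cvec y" by (simp add: cvec_def vec_eq_iff)
lemma cvec_diff: "cvec (x - y) = cvec x - cvec y" by (simp add: cvec_def vec_eq_iff)
lemma cvec_zero[simp]: "cvec 0 = 0" by (simp add: cvec_def vec_eq_iff)
lemma cvec_scaleR: "cvec (r *\<^sub>R x) = of_real r *s cvec x" by (simp add: cvec_def vec_eq_iff)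
lemma cvec_inj: "cvec x = cvec y \<longleftrightarrow> x = y" by (metis rvec_cvec)
lemma cvec_eq0[simp]: "cvec x = 0 \<longleftrightarrow> x = 0" by (metis cvec_zero cvec_inj)

lemma rvec_mult: "rvec (cmat A *v z) = A *v rvec z"
  by (simp add: rvec_def cmat_def matrix_vector_mult_def vec_eq_iff Re_sum)
lemma ivec_mult: "ivec (cmat A *v z) = A *v ivec z"
  by (simp add: ivec_def cmat_def matrix_vector_mult_def vec_eq_iff Im_sum)
lemma cmat_cvec: "cmat A *v cvec x = cvec (A *v x)"
  by (simp add: cvec_def cmat_def matrix_vector_mult_def vec_eq_iff)
lemma cconj_mult: "cconj (cmat A *v z) = cmat A *v cconj z"
  by (simp add: cconj_def cmat_def matrix_vector_mult_def vec_eq_iff)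
lemma cconj_smult: "cconj (c *s z) = cnj c *s cconj z" by (simp add: cconj_def vec_eq_iff)
lemma cconj_add: "cconj (z + w) = cconj z + cconj w" by (simp add: cconj_def vec_eq_iff)
lemma cconj_diff: "cconj (z - w) = cconj z - cconj w" by (simp add: cconj_def vec_eq_iff)
lemma cconj_zero[simp]: "cconj 0 = 0" by (simp add: cconj_def vec_eq_iff)
lemma cconj_eq0[simp]: "cconj z = 0 \<longleftrightarrow> z = 0" by (simp add: cconj_def vec_eq_iff)

lemma cvec_rvec: "cvec (rvec z) = (1/2) *s (z + cconj z)"
  by (simp add: cvec_def rvec_def cconj_def vec_eq_iff complex_eq_iff)
lemma cvec_ivec: "cvec (ivec z) = (-\<i>/2) *s (z - cconj z)"
  by (simp add: cvec_def ivec_def cconj_def vec_eq_iff complex_eq_iff)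
lemma decomp_ri: "z = cvec (rvec z) + \<i> *s cvec (ivec z)"
  by (simp add: cvec_def rvec_def ivec_def vec_eq_iff complex_eq_iff)

lemma fm_cconj: "fm (cmat A) (cnj \<mu>) (cconj v) = cconj (fm (cmat A) \<mu> v)"
  by (simp add: fm_def cconj_diff cconj_mult cconj_smult)
lemma fmk_cconj: "(fm (cmat A) (cnj \<mu>) ^^ k) (cconj v) = cconj ((fm (cmat A) \<mu> ^^ k) v)"
  by (induction k) (auto simp: fm_cconj)
lemma GE_cconj: "v \<in> GE (cmat A) \<mu> \<Longrightarrow> cconj v \<in> GE (cmat A) (cnj \<mu>)"
  unfolding GE_def by (auto simp: fmk_cconj)

definition Sge :: "real^'n^'n \<Rightarrow> (complex^'n) set" where
  "Sge A = {v. \<exists>\<mu>. Re \<mu> \<ge> 0 \<and> gen_eigvec A \<mu> v}"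
definition Slt :: "real^'n^'n \<Rightarrow> (complex^'n) set" where
  "Slt A = {v. \<exists>\<mu>. Re \<mu> < 0 \<and> gen_eigvec A \<mu> v}"

lemma gen_eigvec_GE: "gen_eigvec A \<mu> v \<longleftrightarrow> v \<noteq> 0 \<and> v \<in> GE (cmat A) \<mu>"
proof -
  have "(\<lambda>w. cmat A *v w - \<mu> *s w) = fm (cmat A) \<mu>" by (rule ext) (simp add: fm_def)
  then show ?thesis by (simp add: gen_eigvec_def GE_def)
qed

lemma E_ge0_alt: "E_ge0 A = {x. cvec x \<in> vec.span (Sge A)}"
  by (simp add: E_ge0_def Sge_def)

lemma Sge_cconj: "v \<in> Sge A \<Longrightarrow> cconj v \<in> Sge A"
proof -
  assume "v \<in> Sge A"
  then obtain \<mu> where "Re \<mu> \<ge> 0" "v \<noteq> 0" "v \<in> GE (cmat A) \<mu>"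
    unfolding Sge_def gen_eigvec_GE by blast
  then have "Re (cnj \<mu>) \<ge> 0" "cconj v \<noteq> 0" "cconj v \<in> GE (cmat A) (cnj \<mu>)"
    using GE_cconj by auto
  then show ?thesis unfolding Sge_def gen_eigvec_GE by blast
qed

lemma span_Sge_cconj: "z \<in> vec.span (Sge A) \<Longrightarrow> cconj z \<in> vec.span (Sge A)"
proof (induction rule: vec.span_induct_alt)
  show "cconj 0 \<in> vec.span (Sge A)" by (simp add: vec.span_zero)
next
  fix c x y assume h: "x \<in> Sge A" "cconj y \<in> vec.span (Sge A)"
  have "cconj (c *s x + y) = cnj c *s cconj x + cconj y" by (simp add: cconj_add cconj_smult)
  then show "cconj (c *s x + y) \<in> vec.span (Sge A)" using h Sge_cconj
    by (metis vec.span_add vec.span_base vec.span_scale)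
qed

lemma span_Sge_rvec: "z \<in> vec.span (Sge A) \<Longrightarrow> rvec z \<in> E_ge0 A"
  unfolding E_ge0_alt using span_Sge_cconj
  by (auto simp: cvec_rvec intro!: vec.span_scale vec.span_add)

lemma span_Sge_ivec: "z \<in> vec.span (Sge A) \<Longrightarrow> ivec z \<in> E_ge0 A"
  unfolding E_ge0_alt using span_Sge_cconj
  by (auto simp: cvec_ivec intro!: vec.span_scale vec.span_diff)

lemma E_ge0_subspace: "subspace (E_ge0 A)"
  unfolding subspace_def E_ge0_alt
  by (auto simp: cvec_add cvec_scaleR vec.span_zero intro!: vec.span_add vec.span_scale)

lemma span_Sge_mult: "z \<in> vec.span (Sge A) \<Longrightarrow> cmat A *v z \<in> vec.span (Sge A)"
proof (induction rule: vec.span_induct_alt)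
  show "cmat A *v 0 \<in> vec.span (Sge A)" by (simp add: vec.span_zero)
next
  fix c x y assume h2: "x \<in> Sge A" "cmat A *v y \<in> vec.span (Sge A)"
  obtain \<mu> where x: "Re \<mu> \<ge> 0" "x \<noteq> 0" "x \<in> GE (cmat A) \<mu>"
    using h2(1) unfolding Sge_def gen_eigvec_GE by blast
  have "fm (cmat A) \<mu> x \<in> GE (cmat A) \<mu>" using x(3) by (rule GE_fm)
  then have f: "fm (cmat A) \<mu> x \<in> vec.span (Sge A)"
    using x(1) by (cases "fm (cmat A) \<mu> x = 0")
      (auto simp: vec.span_zero Sge_def gen_eigvec_GE intro!: vec.span_base)
  have xs: "x \<in> vec.span (Sge A)" using h2(1) by (rule vec.span_base)
  have "cmat A *v (c *s x + y) = c *s (fm (cmat A) \<mu> x + \<mu> *s x) + cmat A *v y"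
    by (simp add: fm_def matrix_vector_right_distrib vector_scalar_commute)
  then show "cmat A *v (c *s x + y) \<in> vec.span (Sge A)" using f xs h2(2)
    by (metis vec.span_add vec.span_scale)
qed

lemma E_ge0_inv: "x \<in> E_ge0 A \<Longrightarrow> A *v x \<in> E_ge0 A"
  unfolding E_ge0_alt by (auto simp flip: cmat_cvec intro: span_Sge_mult)

lemma span_split:
  "\<exists>u w. v = u + w \<and> u \<in> vec.span (Sge A) \<and> w \<in> vec.span (Slt A)"
proof -
  have "GEall (cmat A) \<subseteq> vec.span (Sge A \<union> Slt A)"
  proof
    fix v assume "v \<in> GEall (cmat A)"
    then obtain \<mu> where "v \<in> GE (cmat A) \<mu>" by (auto simp: GEall_def)
    then show "v \<in> vec.span (Sge A \<union> Slt A)"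
      by (cases "v = 0"; cases "Re \<mu> \<ge> 0")
        (auto simp: vec.span_zero Sge_def Slt_def gen_eigvec_GE intro!: vec.span_base)
  qed
  then have "vec.span (GEall (cmat A)) \<subseteq> vec.span (Sge A \<union> Slt A)"
    by (simp add: vec.span_minimal vec.subspace_span)
  then have "v \<in> vec.span (Sge A \<union> Slt A)" using GEall_span_UNIV by blast
  then show ?thesis unfolding vec.span_Un by blast
qed

definition csol :: "real^'n^'n \<Rightarrow> (real \<Rightarrow> complex^'n) \<Rightarrow> bool" where
  "csol A Y \<longleftrightarrow> (\<forall>t. (Y has_vector_derivative (cmat A *v Y t)) (at t))"
definition rsol :: "real^'n^'n \<Rightarrow> (real \<Rightarrow> real^'n) \<Rightarrow> bool" where
  "rsol A x \<longleftrightarrow> (\<forall>t. (x has_vector_derivative (A *v x t)) (at t))"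

lemma bl_rvec: "bounded_linear (rvec :: complex^'n \<Rightarrow> real^'n)"
  unfolding linear_conv_bounded_linear[symmetric]
  by (rule linearI) (simp_all add: rvec_add rvec_scaleR)
lemma bl_ivec: "bounded_linear (ivec :: complex^'n \<Rightarrow> real^'n)"
  unfolding linear_conv_bounded_linear[symmetric]
  by (rule linearI) (simp_all add: ivec_add ivec_scaleR)

lemma scaleR_smult: "r *\<^sub>R (z :: complex^'n) = complex_of_real r *s z"
  unfolding vec_eq_iff
proof
  fix i show "(r *\<^sub>R z) $ i = (complex_of_real r *s z) $ i"
    by (simp only: vector_scaleR_component vector_smult_component) (simp add: scaleR_conv_of_real)
qed

lemma bl_smult: "bounded_linear (\<lambda>z :: complex^'n. c *s z)"
  unfolding linear_conv_bounded_linear[symmetric]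
  by (rule linearI) (simp_all add: vector_add_ldistrib scaleR_smult vector_smult_assoc mult.commute)

lemma norm_smult: "norm (c *s (z :: complex^'n)) = cmod c * norm z"
  unfolding norm_vec_def by (simp add: L2_set_right_distrib norm_mult)

lemma norm_rvec_le: "norm (rvec z) \<le> norm z"
  unfolding norm_vec_def rvec_def by (rule L2_set_mono) (auto simp: abs_Re_le_cmod)
lemma norm_ivec_le: "norm (ivec z) \<le> norm z"
  unfolding norm_vec_def ivec_def by (rule L2_set_mono) (auto simp: abs_Im_le_cmod)

lemma bbl_smult: "bounded_bilinear (\<lambda>(a::complex) (z::complex^'n). a *s z)"
proof (rule bounded_bilinear.intro)
  show "\<exists>K. \<forall>a (z::complex^'n). norm (a *s z) \<le> norm a * norm z * K"
    by (rule exI[of _ 1]) (simp add: norm_smult)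
qed (auto simp: vector_add_ldistrib vector_sadd_rdistrib scaleR_smult vector_smult_assoc scaleR_conv_of_real mult.commute)

lemma csol_add: "csol A Y \<Longrightarrow> csol A Z \<Longrightarrow> csol A (\<lambda>t. Y t + Z t)"
  unfolding csol_def by (auto intro!: has_vector_derivative_add[THEN has_vector_derivative_eq_rhs]
      simp: matrix_vector_right_distrib)

lemma csol_smult: "csol A Y \<Longrightarrow> csol A (\<lambda>t. c *s Y t)"
  unfolding csol_def
  by (auto intro!: bounded_linear.has_vector_derivative[OF bl_smult, THEN has_vector_derivative_eq_rhs]
      simp: vector_scalar_commute)

lemma csol_zero: "csol A (\<lambda>t. 0)"
  unfolding csol_def by simp

lemma csol_rvec: "csol A Y \<Longrightarrow> rsol A (\<lambda>t. rvec (Y t))"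
  unfolding csol_def rsol_def
  by (auto intro!: bounded_linear.has_vector_derivative[OF bl_rvec, THEN has_vector_derivative_eq_rhs]
      simp: rvec_mult)

lemma csol_ivec: "csol A Y \<Longrightarrow> rsol A (\<lambda>t. ivec (Y t))"
  unfolding csol_def rsol_def
  by (auto intro!: bounded_linear.has_vector_derivative[OF bl_ivec, THEN has_vector_derivative_eq_rhs]
      simp: ivec_mult)

lemma rsol_add: "rsol A x \<Longrightarrow> rsol A y \<Longrightarrow> rsol A (\<lambda>t. x t + y t)"
  unfolding rsol_def by (auto intro!: has_vector_derivative_add[THEN has_vector_derivative_eq_rhs]
      simp: matrix_vector_right_distrib)

lemma rsol_scale: "rsol A x \<Longrightarrow> rsol A (\<lambda>t. c *\<^sub>R x t)"
  unfolding rsol_def by (auto intro!: bounded_linear.has_vector_derivative[OF bounded_linear_scaleR_right, THEN has_vector_derivative_eq_rhs]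
      simp: matrix_vector_mult_scaleR)

lemma rsol_zero: "rsol A (\<lambda>t. 0)"
  unfolding rsol_def by simp

definition Wsum :: "real^'n^'n \<Rightarrow> complex \<Rightarrow> complex^'n \<Rightarrow> nat \<Rightarrow> real \<Rightarrow> complex^'n" where
  "Wsum A \<mu> v k t = (\<Sum>j<k. (t^j / fact j) *\<^sub>R (fm (cmat A) \<mu> ^^ j) v)"

lemma fm_scaleR: "fm B \<mu> (r *\<^sub>R z) = r *\<^sub>R fm B \<mu> z"
  by (simp add: scaleR_smult fm_scale)

lemma Wsum_deriv:
  "((\<lambda>t. Wsum A \<mu> v (Suc k) t) has_vector_derivative Wsum A \<mu> (fm (cmat A) \<mu> v) k t) (at t)"
proof (induction k)
  case 0
  show ?case by (simp add: Wsum_def)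
next
  case (Suc k)
  have eq: "Wsum A \<mu> v (Suc (Suc k)) = (\<lambda>t. Wsum A \<mu> v (Suc k) t + (t^(Suc k) / fact (Suc k)) *\<^sub>R (fm (cmat A) \<mu> ^^ (Suc k)) v)"
    by (rule ext) (simp add: Wsum_def)
  have d0: "((\<lambda>t. t^(Suc k) / fact (Suc k)) has_real_derivative (real (Suc k) * t^(Suc k - Suc 0) / fact (Suc k))) (at t)"
    by (rule DERIV_cdivide[OF DERIV_pow])
  have "real (Suc k) * t^(Suc k - Suc 0) / fact (Suc k) = t^k / fact k"
    by (simp add: fact_Suc del: of_nat_Suc)
  with d0 have d: "((\<lambda>t. t^(Suc k) / fact (Suc k)) has_real_derivative (t^k / fact k)) (at t)" by simp
  have "((\<lambda>t. Wsum A \<mu> v (Suc k) t + (t^(Suc k) / fact (Suc k)) *\<^sub>R (fm (cmat A) \<mu> ^^ (Suc k)) v)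
        has_vector_derivative (Wsum A \<mu> (fm (cmat A) \<mu> v) k t + (t^k / fact k) *\<^sub>R (fm (cmat A) \<mu> ^^ (Suc k)) v)) (at t)"
    by (intro has_vector_derivative_add Suc)
      (use has_vector_derivative_scaleR[OF d has_vector_derivative_const[of "(fm (cmat A) \<mu> ^^ (Suc k)) v"]] in simp)
  moreover have "Wsum A \<mu> (fm (cmat A) \<mu> v) k t + (t^k / fact k) *\<^sub>R (fm (cmat A) \<mu> ^^ (Suc k)) v
      = Wsum A \<mu> (fm (cmat A) \<mu> v) (Suc k) t"
    by (simp add: Wsum_def funpow_Suc_right del: funpow.simps)
  ultimately show ?case unfolding eq by simp
qed

lemma fm_Wsum: "fm (cmat A) \<mu> (Wsum A \<mu> v k t) = Wsum A \<mu> (fm (cmat A) \<mu> v) k t"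
  by (simp add: Wsum_def fm_sum fm_scaleR fmk_comm)

lemma Wsum_stable: "(fm (cmat A) \<mu> ^^ k) v = 0 \<Longrightarrow> Wsum A \<mu> v (Suc k) t = Wsum A \<mu> v k t"
  by (simp add: Wsum_def)

lemma Wsum_at0: "(fm (cmat A) \<mu> ^^ k) v = 0 \<Longrightarrow> Wsum A \<mu> v k 0 = v"
proof (cases k)
  case 0
  then show "(fm (cmat A) \<mu> ^^ k) v = 0 \<Longrightarrow> ?thesis" by (simp add: Wsum_def)
next
  case (Suc m)
  have "Wsum A \<mu> v (Suc m) 0 = (\<Sum>j<Suc m. (if j = 0 then v else 0))"
    unfolding Wsum_def by (rule sum.cong) auto
  then show ?thesis using Suc by simp
qed

definition gsol :: "real^'n^'n \<Rightarrow> complex \<Rightarrow> complex^'n \<Rightarrow> nat \<Rightarrow> real \<Rightarrow> complex^'n" where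
  "gsol A \<mu> v k t = exp (\<mu> * complex_of_real t) *s Wsum A \<mu> v k t"

lemma gsol_csol:
  assumes "(fm (cmat A) \<mu> ^^ k) v = 0"
  shows "csol A (gsol A \<mu> v k)"
  unfolding csol_def
proof
  fix t
  have W: "((\<lambda>t. Wsum A \<mu> v k t) has_vector_derivative fm (cmat A) \<mu> (Wsum A \<mu> v k t)) (at t)"
    using Wsum_deriv[of A \<mu> v k t] by (simp add: Wsum_stable[OF assms] fm_Wsum)
  have e: "((\<lambda>t. exp (\<mu> * complex_of_real t)) has_vector_derivative (\<mu> * exp (\<mu> * of_real t))) (at t)"
    by (rule has_vector_derivative_real_field) (auto intro!: derivative_eq_intros)
  have "(gsol A \<mu> v k has_vector_derivative
      (exp (\<mu> * of_real t) *s fm (cmat A) \<mu> (Wsum A \<mu> v k t) + (\<mu> * exp (\<mu> * of_real t)) *s Wsum A \<mu> v k t)) (at t)"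
    unfolding gsol_def[abs_def]
    using bounded_bilinear.has_vector_derivative[OF bbl_smult e W] by simp
  moreover have "exp (\<mu> * of_real t) *s fm (cmat A) \<mu> (Wsum A \<mu> v k t) + (\<mu> * exp (\<mu> * of_real t)) *s Wsum A \<mu> v k t
     = cmat A *v gsol A \<mu> v k t"
    by (simp add: gsol_def fm_def vector_ssub_ldistrib vector_scalar_commute vector_smult_assoc mult.commute)
  ultimately show "(gsol A \<mu> v k has_vector_derivative cmat A *v gsol A \<mu> v k t) (at t)" by simp
qed

lemma gsol_at0: "(fm (cmat A) \<mu> ^^ k) v = 0 \<Longrightarrow> gsol A \<mu> v k 0 = v"
  by (simp add: gsol_def Wsum_at0)

lemma pow_fact_le_exp: "(0::real) \<le> x \<Longrightarrow> x^n / fact n \<le> exp x"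
proof -
  assume x: "0 \<le> x"
  have "(\<Sum>i\<in>{n}. x^i /\<^sub>R fact i) \<le> (\<Sum>i. x^i /\<^sub>R fact i)"
    by (rule sum_le_suminf[OF summable_exp_generic]) (use x in auto)
  then show ?thesis by (simp add: exp_def divide_inverse_commute mult.commute)
qed

lemma gsol_bound:
  assumes "Re \<mu> < 0"
  shows "\<exists>M. \<forall>t\<ge>0. norm (gsol A \<mu> v k t) \<le> M * exp (Re \<mu> / 2 * t)"
proof -
  define \<gamma> where "\<gamma> = - Re \<mu> / 2"
  have g: "\<gamma> > 0" using assms by (simp add: \<gamma>_def)
  define M where "M = (\<Sum>j<k. norm ((fm (cmat A) \<mu> ^^ j) v) / \<gamma>^j)"
  have "norm (gsol A \<mu> v k t) \<le> M * exp (Re \<mu> / 2 * t)" if t: "t \<ge> 0" for t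
  proof -
    have tj: "t^j / fact j \<le> exp (\<gamma> * t) / \<gamma>^j" for j
    proof -
      have "(\<gamma> * t)^j / fact j \<le> exp (\<gamma> * t)" using g t by (intro pow_fact_le_exp) simp
      then show ?thesis using g by (simp add: power_mult_distrib field_simps)
    qed
    have "norm (Wsum A \<mu> v k t) \<le> (\<Sum>j<k. norm ((t^j / fact j) *\<^sub>R (fm (cmat A) \<mu> ^^ j) v))"
      unfolding Wsum_def by (rule norm_sum)
    also have "\<dots> = (\<Sum>j<k. (t^j / fact j) * norm ((fm (cmat A) \<mu> ^^ j) v))"
      using t by (simp add: abs_of_nonneg)
    also have "\<dots> \<le> (\<Sum>j<k. (exp (\<gamma> * t) / \<gamma>^j) * norm ((fm (cmat A) \<mu> ^^ j) v))"
      by (intro sum_mono mult_right_mono tj) simp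
    also have "\<dots> = exp (\<gamma> * t) * M"
      by (simp add: M_def sum_distrib_left)
    finally have W: "norm (Wsum A \<mu> v k t) \<le> exp (\<gamma> * t) * M" .
    have "norm (gsol A \<mu> v k t) = exp (Re \<mu> * t) * norm (Wsum A \<mu> v k t)"
      by (simp add: gsol_def norm_smult norm_exp_eq_Re)
    also have "\<dots> \<le> exp (Re \<mu> * t) * (exp (\<gamma> * t) * M)"
      by (rule mult_left_mono[OF W]) simp
    also have "\<dots> = M * (exp (Re \<mu> * t) * exp (\<gamma> * t))" by simp
    also have "exp (Re \<mu> * t) * exp (\<gamma> * t) = exp (Re \<mu> / 2 * t)"
    proof -
      have "Re \<mu> * t + \<gamma> * t = Re \<mu> / 2 * t" by (simp add: \<gamma>_def field_simps)
      then show ?thesis by (metis exp_add)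
    qed
    finally show ?thesis .
  qed
  then show ?thesis by blast
qed

lemma span_Slt_sol:
  assumes "w \<in> vec.span (Slt A)"
  shows "\<exists>Y M \<beta>. csol A Y \<and> Y 0 = w \<and> \<beta> > 0 \<and> (\<forall>t\<ge>0. norm (Y t) \<le> M * exp (-\<beta> * t))"
  using assms
proof (induction rule: vec.span_induct_alt)
  show "\<exists>Y M \<beta>. csol A Y \<and> Y 0 = 0 \<and> \<beta> > 0 \<and> (\<forall>t\<ge>0. norm (Y t) \<le> M * exp (-\<beta> * t))"
    by (rule exI[of _ "\<lambda>t. 0"], rule exI[of _ 0], rule exI[of _ 1]) (simp add: csol_zero)
next
  fix c x y
  assume x: "x \<in> Slt A"
    and "\<exists>Y M \<beta>. csol A Y \<and> Y 0 = y \<and> \<beta> > 0 \<and> (\<forall>t\<ge>0. norm (Y t) \<le> M * exp (-\<beta> * t))"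
  then obtain Yy My \<beta>y where y: "csol A Yy" "Yy 0 = y" "\<beta>y > 0" "\<forall>t\<ge>0. norm (Yy t) \<le> My * exp (-\<beta>y * t)"
    by blast
  obtain \<mu> k where mu: "Re \<mu> < 0" "(fm (cmat A) \<mu> ^^ k) x = 0"
    using x unfolding Slt_def gen_eigvec_GE GE_def by blast
  obtain Mx where Mx: "\<forall>t\<ge>0. norm (gsol A \<mu> x k t) \<le> Mx * exp (Re \<mu> / 2 * t)"
    using gsol_bound[OF mu(1)] by blast
  define \<beta> where "\<beta> = min \<beta>y (- Re \<mu> / 2)"
  have b: "\<beta> > 0" using mu(1) y(3) by (simp add: \<beta>_def)
  define Y where "Y t = c *s gsol A \<mu> x k t + Yy t" for t
  have "csol A Y" unfolding Y_def[abs_def]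
    by (intro csol_add csol_smult gsol_csol mu y)
  moreover have "Y 0 = c *s x + y" by (simp add: Y_def gsol_at0[OF mu(2)] y(2))
  moreover have "norm (Y t) \<le> (cmod c * \<bar>Mx\<bar> + \<bar>My\<bar>) * exp (-\<beta> * t)" if t: "t \<ge> 0" for t
  proof -
    have "Re \<mu> / 2 \<le> -\<beta>" by (simp add: \<beta>_def)
    then have "Re \<mu> / 2 * t \<le> -\<beta> * t" using t by (rule mult_right_mono)
    then have e1: "exp (Re \<mu> / 2 * t) \<le> exp (-\<beta> * t)" by simp
    have e2: "exp (-\<beta>y * t) \<le> exp (-\<beta> * t)" using t by (auto simp: \<beta>_def intro: mult_right_mono)
    have "norm (Y t) \<le> cmod c * norm (gsol A \<mu> x k t) + norm (Yy t)"
      unfolding Y_def by (metis norm_smult norm_triangle_ineq)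
    also have "\<dots> \<le> cmod c * (\<bar>Mx\<bar> * exp (-\<beta> * t)) + \<bar>My\<bar> * exp (-\<beta> * t)"
    proof (intro add_mono mult_left_mono)
      have "norm (gsol A \<mu> x k t) \<le> Mx * exp (Re \<mu> / 2 * t)" using Mx t by blast
      also have "\<dots> \<le> \<bar>Mx\<bar> * exp (-\<beta> * t)"
        using e1 by (meson abs_ge_self abs_ge_zero exp_ge_zero mult_mono order_trans)
      finally show "norm (gsol A \<mu> x k t) \<le> \<bar>Mx\<bar> * exp (-\<beta> * t)" .
      have "norm (Yy t) \<le> My * exp (-\<beta>y * t)" using y(4) t by blast
      also have "\<dots> \<le> \<bar>My\<bar> * exp (-\<beta> * t)"
        using e2 by (meson abs_ge_self abs_ge_zero exp_ge_zero mult_mono order_trans)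
      finally show "norm (Yy t) \<le> \<bar>My\<bar> * exp (-\<beta> * t)" .
    qed simp
    also have "\<dots> = (cmod c * \<bar>Mx\<bar> + \<bar>My\<bar>) * exp (-\<beta> * t)" by (simp add: algebra_simps)
    finally show ?thesis .
  qed
  ultimately show "\<exists>Y M \<beta>. csol A Y \<and> Y 0 = c *s x + y \<and> \<beta> > 0 \<and> (\<forall>t\<ge>0. norm (Y t) \<le> M * exp (-\<beta> * t))"
    using b by blast
qed

lemma gsol_span_Sge:
  assumes x: "x \<in> Sge A" and mu: "Re \<mu> \<ge> 0" "x \<in> GE (cmat A) \<mu>"
  shows "gsol A \<mu> x k t \<in> vec.span (Sge A)"
proof -
  have "(fm (cmat A) \<mu> ^^ j) x \<in> vec.span (Sge A)" for j
  proof -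
    have g: "(fm (cmat A) \<mu> ^^ j) x \<in> GE (cmat A) \<mu>" using mu(2) by (rule GE_fmk)
    show ?thesis
    proof (cases "(fm (cmat A) \<mu> ^^ j) x = 0")
      case True then show ?thesis by (simp add: vec.span_zero)
    next
      case False then show ?thesis using g mu(1)
        by (intro vec.span_base) (auto simp: Sge_def gen_eigvec_GE)
    qed
  qed
  then show ?thesis
    unfolding gsol_def Wsum_def
    by (intro vec.span_scale vec.span_sum) (simp add: scaleR_smult vec.span_scale)
qed

lemma span_Sge_sol:
  assumes "u \<in> vec.span (Sge A)"
  shows "\<exists>Y. csol A Y \<and> Y 0 = u \<and> (\<forall>t. Y t \<in> vec.span (Sge A))"
  using assms
proof (induction rule: vec.span_induct_alt)
  show "\<exists>Y. csol A Y \<and> Y 0 = 0 \<and> (\<forall>t. Y t \<in> vec.span (Sge A))"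
    by (rule exI[of _ "\<lambda>t. 0"]) (simp add: csol_zero vec.span_zero)
next
  fix c x y
  assume x: "x \<in> Sge A" and "\<exists>Y. csol A Y \<and> Y 0 = y \<and> (\<forall>t. Y t \<in> vec.span (Sge A))"
  then obtain Yy where y: "csol A Yy" "Yy 0 = y" "\<forall>t. Yy t \<in> vec.span (Sge A)" by blast
  obtain \<mu> k where mu: "Re \<mu> \<ge> 0" "(fm (cmat A) \<mu> ^^ k) x = 0"
    using x unfolding Sge_def gen_eigvec_GE GE_def by blast
  have muGE: "x \<in> GE (cmat A) \<mu>" using mu(2) by (auto simp: GE_def)
  define Y where "Y t = c *s gsol A \<mu> x k t + Yy t" for t
  have "csol A Y" unfolding Y_def[abs_def]
    by (intro csol_add csol_smult gsol_csol mu y)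
  moreover have "Y 0 = c *s x + y" by (simp add: Y_def gsol_at0[OF mu(2)] y(2))
  moreover have "Y t \<in> vec.span (Sge A)" for t
    unfolding Y_def using gsol_span_Sge[OF x mu(1) muGE] y(3)
    by (intro vec.span_add vec.span_scale) auto
  ultimately show "\<exists>Y. csol A Y \<and> Y 0 = c *s x + y \<and> (\<forall>t. Y t \<in> vec.span (Sge A))" by blast
qed

lemma real_decay:
  assumes "E_ge0 A \<subseteq> E"
  shows "\<exists>X M \<beta>. rsol A X \<and> X 0 = x0 \<and> \<beta> > 0 \<and> (\<forall>t\<ge>0. \<exists>e\<in>E. norm (X t - e) \<le> M * exp (-\<beta> * t))"
proof -
  obtain u w where uw: "cvec x0 = u + w" "u \<in> vec.span (Sge A)" "w \<in> vec.span (Slt A)"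
    using span_split by blast
  obtain Yu where Yu: "csol A Yu" "Yu 0 = u" "\<forall>t. Yu t \<in> vec.span (Sge A)"
    using span_Sge_sol[OF uw(2)] by blast
  obtain Yw M \<beta> where Yw: "csol A Yw" "Yw 0 = w" "\<beta> > 0" "\<forall>t\<ge>0. norm (Yw t) \<le> M * exp (-\<beta> * t)"
    using span_Slt_sol[OF uw(3)] by blast
  define X where "X t = rvec (Yu t + Yw t)" for t
  have "rsol A X" unfolding X_def[abs_def] by (intro csol_rvec csol_add Yu Yw)
  moreover have "X 0 = x0" by (simp add: X_def Yu(2) Yw(2) uw(1)[symmetric])
  moreover have "\<exists>e\<in>E. norm (X t - e) \<le> M * exp (-\<beta> * t)" if "t \<ge> 0" for t
  proof (rule bexI[of _ "rvec (Yu t)"])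
    show "rvec (Yu t) \<in> E" using assms span_Sge_rvec Yu(3) by blast
    have "norm (X t - rvec (Yu t)) = norm (rvec (Yw t))" by (simp add: X_def rvec_add)
    also have "\<dots> \<le> norm (Yw t)" by (rule norm_rvec_le)
    also have "\<dots> \<le> M * exp (-\<beta> * t)" using Yw(4) that by blast
    finally show "norm (X t - rvec (Yu t)) \<le> M * exp (-\<beta> * t)" .
  qed
  ultimately show ?thesis using Yw(3) by blast
qed

definition onb :: "(real^'n) set \<Rightarrow> (real^'n) set" where
  "onb E = (SOME B. B \<subseteq> E \<and> pairwise orthogonal B \<and> (\<forall>x\<in>B. norm x = 1) \<and> independent B \<and> span B = E)"

lemma onb:
  assumes "subspace E"
  shows "onb E \<subseteq> E" "pairwise orthogonal (onb E)" "\<forall>x\<in>onb E. norm x = 1" "finite (onb E)" "span (onb E) = E"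
proof -
  have "\<exists>B. B \<subseteq> E \<and> pairwise orthogonal B \<and> (\<forall>x\<in>B. norm x = 1) \<and> independent B \<and> span B = E"
    using orthonormal_basis_subspace[OF assms] by metis
  then have h: "onb E \<subseteq> E \<and> pairwise orthogonal (onb E) \<and> (\<forall>x\<in>onb E. norm x = 1) \<and> independent (onb E) \<and> span (onb E) = E"
    unfolding onb_def by (rule someI_ex)
  then show "onb E \<subseteq> E" "pairwise orthogonal (onb E)" "\<forall>x\<in>onb E. norm x = 1" "span (onb E) = E"
    by auto
  show "finite (onb E)" using h eucl.finiteI_independent by blast
qed

definition pE :: "(real^'n) set \<Rightarrow> real^'n \<Rightarrow> real^'n" where
  "pE E x = x - (\<Sum>b\<in>onb E. (x \<bullet> b) *\<^sub>R b)"

lemma pE_add: "pE E (x + y) = pE E x + pE E y"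
  by (simp add: pE_def inner_add_left scaleR_add_left sum.distrib)
lemma pE_scale: "pE E (c *\<^sub>R x) = c *\<^sub>R pE E x"
  by (simp add: pE_def scaleR_sum_right scaleR_diff_right)
lemma pE_linear: "linear (pE E)"
  by (rule linearI) (simp_all add: pE_add pE_scale)
lemma pE_bl: "bounded_linear (pE E)"
  using pE_linear linear_conv_bounded_linear by blast
lemma pE_diff: "pE E (x - y) = pE E x - pE E y"
  using pE_add[of E "x - y" y] by simp
lemma pE_zero[simp]: "pE E 0 = 0"
  by (simp add: pE_def)
lemma pE_sum: "pE E (\<Sum>i\<in>S. f i) = (\<Sum>i\<in>S. pE E (f i))"
  by (induction S rule: infinite_finite_induct) (auto simp: pE_add)

lemma pE_orth_b:
  assumes E: "subspace E" and b: "b \<in> onb E"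
  shows "pE E x \<bullet> b = 0"
proof -
  have "(\<Sum>c\<in>onb E. ((x \<bullet> c) *\<^sub>R c) \<bullet> b) = (\<Sum>c\<in>onb E. if c = b then x \<bullet> b else 0)"
  proof (rule sum.cong)
    fix c assume c: "c \<in> onb E"
    show "((x \<bullet> c) *\<^sub>R c) \<bullet> b = (if c = b then x \<bullet> b else 0)"
    proof (cases "c = b")
      case True
      have "b \<bullet> b = 1" using onb(3)[OF E] b by (simp add: dot_square_norm)
      then show ?thesis using True by simp
    next
      case False
      then have "c \<bullet> b = 0" using onb(2)[OF E] b c by (auto simp: pairwise_def orthogonal_def)
      then show ?thesis using False by simp
    qed
  qed simp
  also have "\<dots> = x \<bullet> b" using b onb(4)[OF E] by simp
  finally show ?thesis by (simp add: pE_def inner_diff_left inner_sum_left)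
qed

lemma pE_orth:
  assumes E: "subspace E" and e: "e \<in> E"
  shows "pE E x \<bullet> e = 0"
proof -
  have "orthogonal (pE E x) e"
    by (rule orthogonal_to_span[where S = "onb E"]) (use e onb(5)[OF E] pE_orth_b[OF E] in \<open>auto simp: orthogonal_def\<close>)
  then show ?thesis by (simp add: orthogonal_def)
qed

lemma proj_in:
  assumes E: "subspace E"
  shows "x - pE E x \<in> E"
proof -
  have "(\<Sum>b\<in>onb E. (x \<bullet> b) *\<^sub>R b) \<in> span (onb E)"
    by (intro span_sum span_scale span_base)
  then show ?thesis using onb(5)[OF E] by (simp add: pE_def)
qed

lemma pE_E:
  assumes E: "subspace E" and x: "x \<in> E"
  shows "pE E x = 0"
proof -
  have "pE E x = x - (x - pE E x)" by simp
  also have "\<dots> \<in> E" by (rule subspace_diff[OF E x proj_in[OF E]])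
  finally have "pE E x \<bullet> pE E x = 0" using pE_orth[OF E] by blast
  then show ?thesis by simp
qed

lemma pE_zero_iff:
  assumes E: "subspace E"
  shows "pE E x = 0 \<longleftrightarrow> x \<in> E"
  using pE_E[OF E] proj_in[OF E, of x] by auto

lemma pE_idem:
  assumes E: "subspace E"
  shows "pE E (pE E x) = pE E x"
proof -
  have "pE E (pE E x) = pE E (x - (x - pE E x))" by simp
  also have "\<dots> = pE E x - pE E (x - pE E x)" by (rule pE_diff)
  also have "\<dots> = pE E x" using pE_E[OF E proj_in[OF E]] by simp
  finally show ?thesis .
qed

lemma pE_shift:
  assumes E: "subspace E" and e: "e \<in> E"
  shows "pE E (y - e) = pE E y" "pE E (y + e) = pE E y"
  using pE_E[OF E e] by (simp_all add: pE_diff pE_add)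

lemma pE_norm_le:
  assumes E: "subspace E"
  shows "norm (pE E z) \<le> norm z"
proof -
  define r where "r = z - pE E z"
  have r: "r \<in> E" unfolding r_def by (rule proj_in[OF E])
  have z: "z = pE E z + r" by (simp add: r_def)
  have "z \<bullet> z = pE E z \<bullet> pE E z + 2 * (pE E z \<bullet> r) + r \<bullet> r"
    by (subst (1 2) z) (simp add: inner_add_left inner_add_right inner_commute)
  also have "\<dots> = pE E z \<bullet> pE E z + r \<bullet> r" using pE_orth[OF E r] by simp
  finally have "pE E z \<bullet> pE E z \<le> z \<bullet> z" by simp
  then show ?thesis by (simp add: norm_le)
qed

lemma pE_norm_le2:
  assumes E: "subspace E" and e: "e \<in> E"
  shows "norm (pE E y) \<le> norm (y - e)"
  using pE_norm_le[OF E, of "y - e"] pE_shift[OF E e] by simp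

lemma pE_symm:
  assumes E: "subspace E"
  shows "pE E x \<bullet> y = x \<bullet> pE E y"
proof -
  have "pE E x \<bullet> y = pE E x \<bullet> (pE E y + (y - pE E y))" by simp
  also have "\<dots> = pE E x \<bullet> pE E y" by (simp only: inner_add_right pE_orth[OF E proj_in[OF E]] add_0_right)
  also have "\<dots> = x \<bullet> pE E y"
  proof -
    have "x \<bullet> pE E y = (pE E x + (x - pE E x)) \<bullet> pE E y" by simp
    also have "\<dots> = pE E x \<bullet> pE E y + pE E y \<bullet> (x - pE E x)"
      by (simp only: inner_add_left inner_commute[of "x - pE E x"])
    also have "\<dots> = pE E x \<bullet> pE E y" using pE_orth[OF E proj_in[OF E], of y x] by simp
    finally show ?thesis by simp
  qed
  finally show ?thesis .
qed

lemma pE_self: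
  assumes E: "subspace E"
  shows "x \<bullet> pE E x = pE E x \<bullet> pE E x"
  using pE_symm[OF E, of x "pE E x"] pE_idem[OF E] by simp

definition Qm :: "(real^'n) set \<Rightarrow> real^'n^'n" where "Qm E = matrix (pE E)"

lemma Qm_mult: "Qm E *v x = pE E x"
  unfolding Qm_def using matrix_vector_mul(2)[OF pE_linear] by metis

lemma mat_entry: "(M :: real^'n^'n) $ i $ j = axis i 1 \<bullet> (M *v axis j 1)"
  by (simp add: matrix_vector_mult_basis column_def inner_axis')

lemma Qm_psd_ker:
  assumes E: "subspace E"
  shows "Qm E \<in> psd_ker E"
proof -
  have h: "transpose (Qm E) $ i $ j = Qm E $ i $ j" for i j
  proof -
    have "transpose (Qm E) $ i $ j = Qm E $ j $ i" by (simp add: transpose_def)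
    also have "\<dots> = axis j 1 \<bullet> pE E (axis i 1)" by (simp add: mat_entry Qm_mult)
    also have "\<dots> = axis i 1 \<bullet> pE E (axis j 1)"
      using pE_symm[OF E, of "axis j 1" "axis i 1"] by (simp add: inner_commute)
    also have "\<dots> = Qm E $ i $ j" by (simp add: mat_entry Qm_mult)
    finally show ?thesis .
  qed
  have "transpose (Qm E) = Qm E" by (simp add: vec_eq_iff h)
  moreover have "\<forall>x. 0 \<le> x \<bullet> (Qm E *v x)" by (simp add: Qm_mult pE_self[OF E])
  moreover have "{x. Qm E *v x = 0} = E" by (auto simp: Qm_mult pE_zero_iff[OF E])
  ultimately show ?thesis by (simp add: psd_ker_def)
qed

lemma sn_zero: "seminorm p \<Longrightarrow> p 0 = 0"
  unfolding seminorm_def by (metis abs_0 mult_zero_left scaleR_zero_left)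

lemma sn_neg: "seminorm p \<Longrightarrow> p (- x) = p x"
  unfolding seminorm_def by (metis abs_minus_cancel abs_one mult_1 scaleR_minus1_left)

lemma sn_scale: "seminorm p \<Longrightarrow> p (c *\<^sub>R x) = \<bar>c\<bar> * p x"
  unfolding seminorm_def by blast

lemma sn_tri: "seminorm p \<Longrightarrow> p (x + y) \<le> p x + p y"
  unfolding seminorm_def by blast

lemma sn_nonneg: "seminorm p \<Longrightarrow> 0 \<le> p x"
  unfolding seminorm_def by blast

lemma sn_ker:
  assumes p: "seminorm p" and e: "p e = 0"
  shows "p (x + e) = p x"
proof -
  have "p (x + e) \<le> p x" using sn_tri[OF p, of x e] e by simp
  moreover have "p x \<le> p (x + e)"
    using sn_tri[OF p, of "x + e" "- e"] e sn_neg[OF p, of e] by simp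
  ultimately show ?thesis by simp
qed

lemma sn_sum: "seminorm p \<Longrightarrow> p (\<Sum>i\<in>S. f i) \<le> (\<Sum>i\<in>S. p (f i))"
proof (induction S rule: infinite_finite_induct)
  case (infinite S) then show ?case by (simp add: sn_zero)
next
  case empty then show ?case by (simp add: sn_zero)
next
  case (insert x F)
  then show ?case using sn_tri[OF insert.prems, of "f x" "\<Sum>i\<in>F. f i"] by simp
qed

lemma sn_upper:
  fixes p :: "real^'n \<Rightarrow> real"
  assumes p: "seminorm p"
  shows "\<exists>C\<ge>0. \<forall>x. p x \<le> C * norm x"
proof (intro exI[of _ "\<Sum>i\<in>UNIV. p (axis i 1)"] conjI allI)
  show "0 \<le> (\<Sum>i\<in>UNIV. p (axis i 1))" by (intro sum_nonneg sn_nonneg[OF p])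
  fix x :: "real^'n"
  have "x = (\<Sum>i\<in>UNIV. x$i *\<^sub>R axis i 1)"
    using basis_expansion[of x] by (simp add: scalar_mult_eq_scaleR)
  then have "p x = p (\<Sum>i\<in>UNIV. x$i *\<^sub>R axis i 1)" by simp
  also have "\<dots> \<le> (\<Sum>i\<in>UNIV. p (x$i *\<^sub>R axis i 1))" by (rule sn_sum[OF p])
  also have "\<dots> = (\<Sum>i\<in>UNIV. \<bar>x$i\<bar> * p (axis i 1))" by (simp add: sn_scale[OF p])
  also have "\<dots> \<le> (\<Sum>i\<in>UNIV. norm x * p (axis i 1))"
    by (intro sum_mono mult_right_mono component_le_norm_cart sn_nonneg[OF p])
  also have "\<dots> = (\<Sum>i\<in>UNIV. p (axis i 1)) * norm x" by (simp add: sum_distrib_left mult.commute)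
  finally show "p x \<le> (\<Sum>i\<in>UNIV. p (axis i 1)) * norm x" .
qed

lemma sn_convex:
  fixes p :: "real^'n \<Rightarrow> real"
  shows "seminorm p \<Longrightarrow> convex_on UNIV p"
proof (rule convex_onI)
  fix t :: real and x y :: "real^'n" assume p: "seminorm p" and t: "0 < t" "t < 1"
  have "p ((1 - t) *\<^sub>R x + t *\<^sub>R y) \<le> p ((1 - t) *\<^sub>R x) + p (t *\<^sub>R y)" by (rule sn_tri[OF p])
  also have "\<dots> = (1 - t) * p x + t * p y" using t by (simp add: sn_scale[OF p])
  finally show "p ((1 - t) *\<^sub>R x + t *\<^sub>R y) \<le> (1 - t) * p x + t * p y" .
qed simp

lemma sn_cont: "seminorm p \<Longrightarrow> continuous_on UNIV p"
  by (rule convex_on_continuous[OF open_UNIV sn_convex])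

lemma sn_pE:
  assumes E: "subspace E" and p: "seminorm p" and pk: "seminorm_ker p = E"
  shows "p (pE E x) = p x"
proof -
  have e: "p (x - pE E x) = 0" using proj_in[OF E, of x] pk by (auto simp: seminorm_ker_def)
  show ?thesis using sn_ker[OF p e, of "pE E x"] by simp
qed

lemma sn_lower:
  assumes E: "subspace E" and p: "seminorm p" and pk: "seminorm_ker p = E"
  shows "\<exists>c>0. \<forall>x. c * norm (pE E x) \<le> p x"
proof -
  define K where "K = sphere 0 1 \<inter> {z. pE E z = z}"
  have cK: "compact K" unfolding K_def
    by (intro compact_Int_closed compact_sphere closed_Collect_eq linear_continuous_on pE_bl continuous_on_id)
  have scale_in: "(1 / norm (pE E x)) *\<^sub>R pE E x \<in> K" if "pE E x \<noteq> 0" for x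
    using that by (simp add: K_def pE_scale pE_idem[OF E])
  show ?thesis
  proof (cases "K = {}")
    case True
    then have "pE E x = 0" for x using scale_in by blast
    then show ?thesis using sn_nonneg[OF p] by (intro exI[of _ 1]) auto
  next
    case False
    obtain z where z: "z \<in> K" "\<forall>y\<in>K. p z \<le> p y"
      using continuous_attains_inf[OF cK False continuous_on_subset[OF sn_cont[OF p]]] by blast
    have pz: "p z > 0"
    proof -
      have "p z \<noteq> 0"
      proof
        assume "p z = 0"
        then have "z \<in> E" using pk by (auto simp: seminorm_ker_def)
        then have "pE E z = 0" by (rule pE_E[OF E])
        then show False using z(1) by (auto simp: K_def)
      qed
      then show ?thesis using sn_nonneg[OF p, of z] by simp
    qed
    have "p z * norm (pE E x) \<le> p x" for x
    proof (cases "pE E x = 0")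
      case True then show ?thesis using sn_nonneg[OF p] by simp
    next
      case False
      define n where "n = norm (pE E x)"
      have n: "n > 0" using False by (simp add: n_def)
      have "p z \<le> p ((1 / n) *\<^sub>R pE E x)" using z(2) scale_in[OF False] by (simp add: n_def)
      also have "\<dots> = p (pE E x) / n" using n by (simp add: sn_scale[OF p])
      finally have "p z * n \<le> p (pE E x)" using n by (simp add: field_simps)
      then show ?thesis using sn_pE[OF E p pk] by (simp add: n_def)
    qed
    then show ?thesis using pz by blast
  qed
qed

lemma lin_unique:
  fixes d :: "real \<Rightarrow> real^'n" and M :: "real^'n^'n"
  assumes d: "\<forall>s\<ge>0. (d has_vector_derivative (M *v d s)) (at s within {0..})"
    and d0: "d 0 = 0" and t: "t \<ge> 0"
  shows "d t = 0"
proof -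
  define K where "K = onorm ((*v) M)"
  have K0: "K \<ge> 0" unfolding K_def by (rule onorm_pos_le[OF matrix_vector_mul_bounded_linear])
  have bnd: "d s \<bullet> (M *v d s) \<le> K * (d s \<bullet> d s)" for s
  proof -
    have "d s \<bullet> (M *v d s) \<le> norm (d s) * norm (M *v d s)" by (rule norm_cauchy_schwarz)
    also have "\<dots> \<le> norm (d s) * (K * norm (d s))"
      unfolding K_def by (intro mult_left_mono onorm[OF matrix_vector_mul_bounded_linear]) simp
    also have "\<dots> = K * (d s \<bullet> d s)" by (simp add: dot_square_norm power2_eq_square)
    finally show ?thesis .
  qed
  define g where "g s = (d s \<bullet> d s) * exp (-2*K * s)" for s
  have gd: "(g has_real_derivative ((d s \<bullet> (M *v d s) + (M *v d s) \<bullet> d s) * exp (-2*K * s)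
            + (d s \<bullet> d s) * (exp (-2*K * s) * (-2*K)))) (at s within {0..})" if s: "s \<ge> 0" for s
  proof -
    have i: "((\<lambda>s. d s \<bullet> d s) has_real_derivative (d s \<bullet> (M *v d s) + (M *v d s) \<bullet> d s)) (at s within {0..})"
      unfolding has_real_derivative_iff_has_vector_derivative
      using bounded_bilinear.has_vector_derivative[OF bounded_bilinear_inner d[rule_format, OF s] d[rule_format, OF s]] .
    have e: "((\<lambda>s. exp (-2*K * s)) has_real_derivative (exp (-2*K * s) * (-2*K))) (at s within {0..})"
      by (auto intro!: derivative_eq_intros)
    show ?thesis unfolding g_def[abs_def] by (rule DERIV_cong[OF DERIV_mult[OF i e]]) (simp add: algebra_simps)
  qed
  have gle: "g t \<le> g 0"
  proof (rule DERIV_nonpos_imp_decreasing_open[OF t])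
    fix s assume s: "0 < s" "s < t"
    have "at s within {0..} = at s" by (rule at_within_interior) (use s in simp)
    then have D: "(g has_real_derivative ((d s \<bullet> (M *v d s) + (M *v d s) \<bullet> d s) * exp (-2*K * s)
            + (d s \<bullet> d s) * (exp (-2*K * s) * (-2*K)))) (at s)" using gd[of s] s by simp
    have ar: "\<And>a c e. (a + a) * e + c * (e * (-2*K)) = 2 * e * (a - K * c)"
      by (simp add: algebra_simps)
    have "(d s \<bullet> (M *v d s) + (M *v d s) \<bullet> d s) * exp (-2*K * s) + (d s \<bullet> d s) * (exp (-2*K * s) * (-2*K))
        = 2 * exp (-2*K * s) * (d s \<bullet> (M *v d s) - K * (d s \<bullet> d s))"
      unfolding inner_commute[of "M *v d s"] by (rule ar)
    also have "\<dots> \<le> 0" using bnd[of s] by (intro mult_nonneg_nonpos) auto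
    finally show "\<exists>y. (g has_real_derivative y) (at s) \<and> y \<le> 0" using D by blast
  next
    show "continuous_on {0..t} g"
    proof (rule DERIV_continuous_on)
      fix s assume "s \<in> {0..t}"
      then show "(g has_real_derivative ((d s \<bullet> (M *v d s) + (M *v d s) \<bullet> d s) * exp (-2*K * s)
            + (d s \<bullet> d s) * (exp (-2*K * s) * (-2*K)))) (at s within {0..t})"
        by (intro DERIV_subset[OF gd]) auto
    qed
  qed
  have "g 0 = 0" by (simp add: g_def d0)
  moreover have "g t \<ge> 0" by (simp add: g_def)
  ultimately have "g t = 0" using gle by simp
  then show ?thesis by (simp add: g_def)
qed

lemma rsol_sum: "(\<And>i. i \<in> S \<Longrightarrow> rsol A (X i)) \<Longrightarrow> rsol A (\<lambda>t. \<Sum>i\<in>S. X i t)"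
proof (induction S rule: infinite_finite_induct)
  case (infinite S) then show ?case by (simp add: rsol_zero)
next
  case empty then show ?case by (simp add: rsol_zero)
next
  case (insert x F) then show ?case by (simp add: rsol_add)
qed

lemma uniform_decay:
  assumes E: "subspace E" and ge: "E_ge0 A \<subseteq> E"
  shows "\<exists>K \<beta>. K \<ge> 0 \<and> \<beta> > 0 \<and> (\<forall>z. \<exists>X. rsol A X \<and> X 0 = z \<and> (\<forall>t\<ge>0. norm (pE E (X t)) \<le> K * norm z * exp (-\<beta>*t)))"
proof -
  have "\<forall>i. \<exists>X M \<beta>. rsol A X \<and> X 0 = axis i 1 \<and> \<beta> > 0 \<and> (\<forall>t\<ge>0. \<exists>e\<in>E. norm (X t - e) \<le> M * exp (-\<beta>*t))"
    using real_decay[OF ge] by blast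
  then obtain Xf Mf \<beta>f where H: "\<And>i. rsol A (Xf i)" "\<And>i. Xf i 0 = axis i 1" "\<And>i. \<beta>f i > 0"
      "\<And>i t. t \<ge> 0 \<Longrightarrow> \<exists>e\<in>E. norm (Xf i t - e) \<le> Mf i * exp (-\<beta>f i * t)"
    by metis
  define \<beta> where "\<beta> = Min (range \<beta>f)"
  have \<beta>in: "\<beta> \<in> range \<beta>f" unfolding \<beta>_def by (rule Min_in) auto
  then have b0: "\<beta> > 0" using H(3) by auto
  have ble: "\<beta> \<le> \<beta>f i" for i unfolding \<beta>_def by (rule Min_le) auto
  define K where "K = (\<Sum>i\<in>UNIV. \<bar>Mf i\<bar>)"
  have K0: "K \<ge> 0" by (simp add: K_def sum_nonneg)
  have bi: "norm (pE E (Xf i t)) \<le> \<bar>Mf i\<bar> * exp (-\<beta>*t)" if t: "t \<ge> 0" for i t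
  proof -
    obtain e where e: "e \<in> E" "norm (Xf i t - e) \<le> Mf i * exp (-\<beta>f i * t)" using H(4)[OF t] by blast
    have "-\<beta>f i * t \<le> -\<beta>*t" using ble[of i] t by (simp add: mult_right_mono)
    then have "exp (-\<beta>f i * t) \<le> exp (-\<beta>*t)" by simp
    then have "Mf i * exp (-\<beta>f i * t) \<le> \<bar>Mf i\<bar> * exp (-\<beta>*t)"
      by (meson abs_ge_self abs_ge_zero exp_ge_zero mult_mono order_trans)
    then show ?thesis using pE_norm_le2[OF E e(1), of "Xf i t"] e(2) by linarith
  qed
  have "\<exists>X. rsol A X \<and> X 0 = z \<and> (\<forall>t\<ge>0. norm (pE E (X t)) \<le> K * norm z * exp (-\<beta>*t))" for z
  proof -
    define X where "X t = (\<Sum>i\<in>UNIV. z$i *\<^sub>R Xf i t)" for t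
    have "rsol A X" unfolding X_def[abs_def] by (intro rsol_sum rsol_scale H(1))
    moreover have "X 0 = z" using basis_expansion[of z] by (simp add: X_def H(2) scalar_mult_eq_scaleR)
    moreover have "norm (pE E (X t)) \<le> K * norm z * exp (-\<beta>*t)" if t: "t \<ge> 0" for t
    proof -
      have "norm (pE E (X t)) = norm (\<Sum>i\<in>UNIV. z$i *\<^sub>R pE E (Xf i t))" by (simp add: X_def pE_sum pE_scale)
      also have "\<dots> \<le> (\<Sum>i\<in>UNIV. norm (z$i *\<^sub>R pE E (Xf i t)))" by (rule norm_sum)
      also have "\<dots> \<le> (\<Sum>i\<in>UNIV. norm z * (\<bar>Mf i\<bar> * exp (-\<beta>*t)))"
      proof (intro sum_mono)
        fix i
        have "\<bar>z$i\<bar> * norm (pE E (Xf i t)) \<le> norm z * (\<bar>Mf i\<bar> * exp (-\<beta>*t))"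
          by (intro mult_mono component_le_norm_cart bi[OF t]) auto
        then show "norm (z$i *\<^sub>R pE E (Xf i t)) \<le> norm z * (\<bar>Mf i\<bar> * exp (-\<beta>*t))" by simp
      qed
      also have "\<dots> = K * norm z * exp (-\<beta>*t)" by (simp add: K_def sum_distrib_left sum_distrib_right mult_ac)
      finally show ?thesis .
    qed
    ultimately show ?thesis by blast
  qed
  then show ?thesis using K0 b0 by blast
qed

lemma pE_A:
  assumes E: "subspace E" and inv: "\<forall>x\<in>E. A *v x \<in> E"
  shows "pE E (A *v w) = pE E (A *v pE E w)"
proof -
  have "A *v w = A *v pE E w + A *v (w - pE E w)" by (simp add: matrix_vector_mult_diff_distrib)
  moreover have "A *v (w - pE E w) \<in> E" using inv proj_in[OF E] by blast
  ultimately show ?thesis using pE_shift(2)[OF E] by metis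
qed

lemma stmt1_ges:
  assumes E: "subspace E" and inv: "\<forall>x\<in>E. A *v x \<in> E" and ge: "E_ge0 A \<subseteq> E"
    and p: "seminorm p" and pk: "seminorm_ker p = E"
  shows "ges_wrt A p"
proof -
  obtain K \<beta> where Kb: "K \<ge> 0" "\<beta> > 0"
    "\<And>z. \<exists>X. rsol A X \<and> X 0 = z \<and> (\<forall>t\<ge>0. norm (pE E (X t)) \<le> K * norm z * exp (-\<beta>*t))"
    using uniform_decay[OF E ge] by blast
  obtain C where C: "C \<ge> 0" "\<And>x. p x \<le> C * norm x" using sn_upper[OF p] by blast
  obtain c where c: "c > 0" "\<And>x. c * norm (pE E x) \<le> p x" using sn_lower[OF E p pk] by blast
  define \<alpha> where "\<alpha> = C * K / c + 1"
  have "C * K / c \<ge> 0" using C(1) Kb(1) c(1) by simp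
  then have a0: "\<alpha> > 0" by (simp add: \<alpha>_def)
  have main: "p (x t) \<le> \<alpha> * p (x 0) * exp (-\<beta>*t)"
    if x: "\<forall>t\<ge>0. (x has_vector_derivative (A *v x t)) (at t within {0..})" and t: "t \<ge> 0" for x t
  proof -
    obtain X where X: "rsol A X" "X 0 = pE E (x 0)"
      "\<forall>t\<ge>0. norm (pE E (X t)) \<le> K * norm (pE E (x 0)) * exp (-\<beta>*t)"
      using Kb(3) by blast
    define d where "d s = pE E (x s) - pE E (X s)" for s
    have dd: "(d has_vector_derivative ((Qm E ** A) *v d s)) (at s within {0..})" if s: "s \<ge> 0" for s
    proof -
      have Xd: "(X has_vector_derivative (A *v X s)) (at s within {0..})"
        using X(1) unfolding rsol_def by (blast intro: has_vector_derivative_at_within)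
      have "(d has_vector_derivative (pE E (A *v x s) - pE E (A *v X s))) (at s within {0..})"
        unfolding d_def[abs_def]
        by (intro has_vector_derivative_diff bounded_linear.has_vector_derivative[OF pE_bl] Xd)
          (use x s in blast)
      moreover have "pE E (A *v x s) - pE E (A *v X s) = (Qm E ** A) *v d s"
      proof -
        have "pE E (A *v x s) - pE E (A *v X s) = pE E (A *v (x s - X s))"
          by (simp add: pE_diff matrix_vector_mult_diff_distrib)
        also have "\<dots> = pE E (A *v pE E (x s - X s))" by (rule pE_A[OF E inv])
        also have "\<dots> = (Qm E ** A) *v d s"
          by (simp add: d_def pE_diff Qm_mult matrix_vector_mul_assoc[symmetric])
        finally show ?thesis .
      qed
      ultimately show ?thesis by simp
    qed
    have "d 0 = 0" by (simp add: d_def X(2) pE_idem[OF E])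
    then have "d t = 0" using lin_unique[of d "Qm E ** A" t] dd t by blast
    then have eq: "pE E (x t) = pE E (X t)" by (simp add: d_def)
    have "p (x t) = p (pE E (x t))" using sn_pE[OF E p pk] by simp
    also have "\<dots> \<le> C * norm (pE E (X t))" using C(2) eq by simp
    also have "\<dots> \<le> C * (K * norm (pE E (x 0)) * exp (-\<beta>*t))"
      using X(3) t C(1) by (simp add: mult_left_mono)
    also have "\<dots> \<le> C * (K * (p (x 0) / c) * exp (-\<beta>*t))"
    proof -
      have "norm (pE E (x 0)) \<le> p (x 0) / c" using c by (simp add: field_simps mult.commute)
      then show ?thesis using C(1) Kb(1) by (intro mult_left_mono mult_right_mono) auto
    qed
    also have "\<dots> = (C * K / c) * p (x 0) * exp (-\<beta>*t)" by simp
    also have "\<dots> \<le> \<alpha> * p (x 0) * exp (-\<beta>*t)"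
      using sn_nonneg[OF p, of "x 0"] by (intro mult_right_mono) (auto simp: \<alpha>_def)
    finally show ?thesis .
  qed
  show ?thesis unfolding ges_wrt_def using a0 Kb(2) main by blast
qed

definition EC :: "(real^'n) set \<Rightarrow> (complex^'n) set" where
  "EC E = {z. rvec z \<in> E \<and> ivec z \<in> E}"

lemma EC_subspace: "subspace E \<Longrightarrow> vec.subspace (EC E)"
  unfolding vec.subspace_def EC_def
  by (auto simp: rvec_add ivec_add rvec_smult ivec_smult subspace_0 subspace_add
      intro!: subspace_diff subspace_add subspace_scale)

lemma EC_fm:
  assumes E: "subspace E" and inv: "\<forall>x\<in>E. A *v x \<in> E" and z: "z \<in> EC E"
  shows "fm (cmat A) \<mu> z \<in> EC E"
proof -
  have r: "rvec z \<in> E" and i: "ivec z \<in> E" using z by (auto simp: EC_def)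
  have "rvec (fm (cmat A) \<mu> z) = A *v rvec z - (Re \<mu> *\<^sub>R rvec z - Im \<mu> *\<^sub>R ivec z)"
    by (simp add: fm_def rvec_diff rvec_mult rvec_smult)
  moreover have "ivec (fm (cmat A) \<mu> z) = A *v ivec z - (Im \<mu> *\<^sub>R rvec z + Re \<mu> *\<^sub>R ivec z)"
    by (simp add: fm_def ivec_diff ivec_mult ivec_smult)
  ultimately show ?thesis using r i inv E unfolding EC_def
    by (auto intro!: subspace_diff subspace_add subspace_scale)
qed

lemma EC_fmk:
  assumes E: "subspace E" and inv: "\<forall>x\<in>E. A *v x \<in> E" and z: "z \<in> EC E"
  shows "(fm (cmat A) \<mu> ^^ j) z \<in> EC E"
  by (induction j) (auto simp: z EC_fm[OF E inv])

lemma Ege0_sub_generic: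
  assumes E: "subspace E"
    and step: "\<And>\<mu> k v. Re \<mu> \<ge> 0 \<Longrightarrow> (fm (cmat A) \<mu> ^^ Suc k) v = 0 \<Longrightarrow> fm (cmat A) \<mu> v \<in> EC E \<Longrightarrow> v \<in> EC E"
  shows "E_ge0 A \<subseteq> E"
proof -
  have gen: "(fm (cmat A) \<mu> ^^ k) v = 0 \<Longrightarrow> Re \<mu> \<ge> 0 \<Longrightarrow> v \<in> EC E" for k \<mu> v
  proof (induction k arbitrary: v)
    case 0 then show ?case using vec.subspace_0[OF EC_subspace[OF E]] by simp
  next
    case (Suc k)
    have "(fm (cmat A) \<mu> ^^ k) (fm (cmat A) \<mu> v) = 0"
      using Suc.prems(1) by (simp only: funpow_Suc_right o_apply)
    then have "fm (cmat A) \<mu> v \<in> EC E" using Suc.IH Suc.prems(2) by blast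
    then show ?case using step Suc.prems by blast
  qed
  have "Sge A \<subseteq> EC E" using gen by (auto simp: Sge_def gen_eigvec_GE GE_def)
  then have "vec.span (Sge A) \<subseteq> EC E" by (rule vec.span_minimal[OF _ EC_subspace[OF E]])
  then show ?thesis by (auto simp: E_ge0_alt EC_def)
qed

lemma dot_transpose: "y \<bullet> (transpose M *v z) = (M *v y) \<bullet> (z :: real^'n)"
  by (metis dot_lmul_matrix inner_commute transpose_matrix_vector)

lemma sym_dot: "transpose P = P \<Longrightarrow> y \<bullet> (P *v z) = (P *v y) \<bullet> (z :: real^'n)"
  using dot_transpose[of y P z] by simp

lemma psd_zero:
  fixes Q :: "real^'n^'n"
  assumes sym: "transpose Q = Q" and psd: "\<forall>x. 0 \<le> x \<bullet> (Q *v x)" and x0: "x \<bullet> (Q *v x) = 0"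
  shows "Q *v x = 0"
proof -
  define w where "w = Q *v x"
  define s where "s = w \<bullet> w"
  define c where "c = w \<bullet> (Q *v w)"
  have c0: "c \<ge> 0" using psd by (simp add: c_def)
  have H: "0 \<le> 2 * t * s + t^2 * c" for t
  proof -
    have xw: "x \<bullet> (Q *v w) = s" using sym_dot[OF sym, of x w] by (simp add: s_def w_def)
    have wx: "w \<bullet> (Q *v x) = s" by (simp add: s_def w_def)
    have "0 \<le> (x + t *\<^sub>R w) \<bullet> (Q *v (x + t *\<^sub>R w))" using psd by blast
    also have "\<dots> = x \<bullet> (Q *v x) + t * (x \<bullet> (Q *v w)) + t * (w \<bullet> (Q *v x)) + t^2 * (w \<bullet> (Q *v w))"
      by (simp add: matrix_vector_right_distrib matrix_vector_mult_scaleR inner_add_left inner_add_right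
          algebra_simps power2_eq_square)
    also have "\<dots> = 2 * t * s + t^2 * c" using x0 xw wx by (simp add: c_def)
    finally show ?thesis .
  qed
  have "s = 0"
  proof (cases "c = 0")
    case True
    then have "s \<le> 0" using H[of "-1"] by simp
    moreover have "s \<ge> 0" by (simp add: s_def)
    ultimately show ?thesis by simp
  next
    case False
    then have cp: "c > 0" using c0 by simp
    have "0 \<le> 2 * (-s/c) * s + (-s/c)^2 * c" by (rule H)
    also have "\<dots> = - (s^2 / c)" using cp by (simp add: power2_eq_square field_simps)
    finally have "s^2 / c \<le> 0" by simp
    then have "s^2 \<le> 0" using cp by (simp add: divide_le_0_iff)
    then show ?thesis by simp
  qed
  then show ?thesis by (simp add: s_def w_def)
qed

lemma stmt4_stmt1:
  assumes E: "subspace E" and s4: "stmt4 A E"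
  shows "stmt1 A E"
proof -
  obtain P Q where P: "P \<in> psd_ker E" and Q: "Q \<in> psd_ker E"
    and eq: "transpose A ** P + P ** A + Q = 0"
    using s4 by (auto simp: stmt4_def)
  have Ps: "transpose P = P" "\<forall>x. 0 \<le> x \<bullet> (P *v x)" "{x. P *v x = 0} = E" using P by (auto simp: psd_ker_def)
  have Qs: "transpose Q = Q" "\<forall>x. 0 \<le> x \<bullet> (Q *v x)" "{x. Q *v x = 0} = E" using Q by (auto simp: psd_ker_def)
  have PE: "P *v x = 0 \<longleftrightarrow> x \<in> E" for x using Ps(3) by blast
  have QE: "Q *v x = 0 \<longleftrightarrow> x \<in> E" for x using Qs(3) by blast
  have key: "transpose A *v (P *v y) + P *v (A *v y) + Q *v y = 0" for y
  proof -
    have "(transpose A ** P + P ** A + Q) *v y = 0" using eq by simp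
    then show ?thesis by (simp add: matrix_vector_mult_add_rdistrib matrix_vector_mul_assoc[symmetric])
  qed
  have inv: "\<forall>x\<in>E. A *v x \<in> E"
  proof
    fix x assume x: "x \<in> E"
    have "P *v x = 0" "Q *v x = 0" using PE QE x by auto
    then have "P *v (A *v x) = 0" using key[of x] by simp
    then show "A *v x \<in> E" using PE by blast
  qed
  have quad: "2 * ((A *v y) \<bullet> (P *v y)) + y \<bullet> (Q *v y) = 0" for y
  proof -
    have "y \<bullet> (transpose A *v (P *v y) + P *v (A *v y) + Q *v y) = 0" using key by simp
    moreover have "y \<bullet> (transpose A *v (P *v y)) = (A *v y) \<bullet> (P *v y)" by (rule dot_transpose)
    moreover have "y \<bullet> (P *v (A *v y)) = (A *v y) \<bullet> (P *v y)"
      using sym_dot[OF Ps(1), of y "A *v y"] by (simp add: inner_commute)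
    ultimately show ?thesis by (simp add: inner_add_right)
  qed
  have "E_ge0 A \<subseteq> E"
  proof (rule Ege0_sub_generic[OF E])
    fix \<mu> k v assume r0: "Re \<mu> \<ge> 0" and u: "fm (cmat A) \<mu> v \<in> EC E"
    define a where "a = rvec v"
    define b where "b = ivec v"
    define ua where "ua = rvec (fm (cmat A) \<mu> v)"
    define ub where "ub = ivec (fm (cmat A) \<mu> v)"
    have uaE: "P *v ua = 0" "P *v ub = 0" using u PE by (auto simp: EC_def ua_def ub_def)
    have Aa: "A *v a = ua + (Re \<mu> *\<^sub>R a - Im \<mu> *\<^sub>R b)"
      by (simp add: ua_def a_def b_def fm_def rvec_diff rvec_mult rvec_smult)
    have Ab: "A *v b = ub + (Im \<mu> *\<^sub>R a + Re \<mu> *\<^sub>R b)"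
      by (simp add: ub_def a_def b_def fm_def ivec_diff ivec_mult ivec_smult)
    have z1: "ua \<bullet> (P *v a) = 0" using sym_dot[OF Ps(1), of ua a] uaE by simp
    have z2: "ub \<bullet> (P *v b) = 0" using sym_dot[OF Ps(1), of ub b] uaE by simp
    have ab: "b \<bullet> (P *v a) = a \<bullet> (P *v b)" using sym_dot[OF Ps(1), of a b] by (simp add: inner_commute)
    have ea: "(A *v a) \<bullet> (P *v a) = Re \<mu> * (a \<bullet> (P *v a)) - Im \<mu> * (b \<bullet> (P *v a))"
      unfolding Aa using z1 by (simp add: inner_add_left inner_diff_left)
    have eb: "(A *v b) \<bullet> (P *v b) = Im \<mu> * (a \<bullet> (P *v b)) + Re \<mu> * (b \<bullet> (P *v b))"
      unfolding Ab using z2 by (simp add: inner_add_left)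
    have "2 * (Re \<mu> * (a \<bullet> (P *v a) + b \<bullet> (P *v b))) + (a \<bullet> (Q *v a) + b \<bullet> (Q *v b)) = 0"
      using quad[of a] quad[of b] ea eb ab by (simp add: algebra_simps)
    moreover have "0 \<le> Re \<mu> * (a \<bullet> (P *v a) + b \<bullet> (P *v b))" using r0 Ps(2) by simp
    moreover have "0 \<le> a \<bullet> (Q *v a)" "0 \<le> b \<bullet> (Q *v b)" using Qs(2) by auto
    ultimately have "a \<bullet> (Q *v a) = 0" "b \<bullet> (Q *v b) = 0" by linarith+
    then have "Q *v a = 0" "Q *v b = 0" using psd_zero[OF Qs(1) Qs(2)] by auto
    then show "v \<in> EC E" using QE by (simp add: EC_def a_def b_def)
  qed
  then show ?thesis using inv by (simp add: stmt1_def)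
qed

lemma exp_small:
  fixes a \<beta> M :: real
  assumes a: "0 < a" and b: "0 < \<beta>"
  shows "\<exists>t\<ge>0. M * exp (-\<beta>*t) < a"
proof (cases "M \<le> 0")
  case True
  have "M * exp (-\<beta>*0) < a" using a True by simp
  then show ?thesis by blast
next
  case False
  then have M: "M > 0" by simp
  define L where "L = ln (2 * M / a)"
  define t where "t = \<bar>L\<bar> / \<beta>"
  have t0: "t \<ge> 0" using b by (simp add: t_def)
  have "-\<beta>*t = - \<bar>L\<bar>" using b by (simp add: t_def)
  then have "exp (-\<beta>*t) \<le> exp (- L)" by simp
  also have "exp (- L) = a / (2 * M)" using M a by (simp add: L_def exp_minus')
  finally have "exp (-\<beta>*t) \<le> a / (2 * M)" .
  then have "M * exp (-\<beta>*t) \<le> M * (a / (2 * M))" using M by (intro mult_left_mono) auto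
  also have "\<dots> = a / 2" using M by simp
  also have "\<dots> < a" using a by simp
  finally show ?thesis using t0 by blast
qed

lemma rsol_within: "rsol A X \<Longrightarrow> \<forall>t\<ge>0. (X has_vector_derivative A *v X t) (at t within {0..})"
  unfolding rsol_def by (blast intro: has_vector_derivative_at_within)

lemma rsol_exists: "\<exists>X. rsol A X \<and> X 0 = x0"
  using real_decay[of A "E_ge0 A" x0] by blast

definition qn :: "(real^'n \<Rightarrow> real) \<Rightarrow> complex^'n \<Rightarrow> real" where
  "qn p z = p (rvec z) + p (ivec z)"

lemma qn_smult_le:
  assumes p: "seminorm p"
  shows "qn p (c *s z) \<le> 2 * cmod c * qn p z"
proof -
  have r: "p (rvec (c *s z)) \<le> cmod c * qn p z"
  proof -
    have "p (rvec (c *s z)) \<le> p (Re c *\<^sub>R rvec z) + p (- (Im c *\<^sub>R ivec z))"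
      using sn_tri[OF p, of "Re c *\<^sub>R rvec z" "- (Im c *\<^sub>R ivec z)"] by (simp add: rvec_smult)
    also have "\<dots> = \<bar>Re c\<bar> * p (rvec z) + \<bar>Im c\<bar> * p (ivec z)"
      by (simp add: sn_neg[OF p] sn_scale[OF p])
    also have "\<dots> \<le> cmod c * p (rvec z) + cmod c * p (ivec z)"
      using sn_nonneg[OF p] by (intro add_mono mult_right_mono abs_Re_le_cmod abs_Im_le_cmod) auto
    finally show ?thesis by (simp add: qn_def algebra_simps)
  qed
  have i: "p (ivec (c *s z)) \<le> cmod c * qn p z"
  proof -
    have "p (ivec (c *s z)) \<le> p (Im c *\<^sub>R rvec z) + p (Re c *\<^sub>R ivec z)"
      using sn_tri[OF p, of "Im c *\<^sub>R rvec z" "Re c *\<^sub>R ivec z"] by (simp add: ivec_smult)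
    also have "\<dots> = \<bar>Im c\<bar> * p (rvec z) + \<bar>Re c\<bar> * p (ivec z)"
      by (simp add: sn_scale[OF p])
    also have "\<dots> \<le> cmod c * p (rvec z) + cmod c * p (ivec z)"
      using sn_nonneg[OF p] by (intro add_mono mult_right_mono abs_Re_le_cmod abs_Im_le_cmod) auto
    finally show ?thesis by (simp add: qn_def algebra_simps)
  qed
  show ?thesis using r i by (simp add: qn_def)
qed

lemma qn_EC:
  assumes p: "seminorm p" and pk: "seminorm_ker p = E" and e: "e \<in> EC E"
  shows "qn p (z + e) = qn p z"
proof -
  have "p (rvec e) = 0" "p (ivec e) = 0" using e pk by (auto simp: EC_def seminorm_ker_def)
  then show ?thesis by (simp add: qn_def rvec_add ivec_add sn_ker[OF p])
qed

lemma stmt2_stmt1: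
  assumes E: "subspace E" and s2: "stmt2 A E"
  shows "stmt1 A E"
proof -
  obtain p where p: "seminorm p" and pk: "seminorm_ker p = E" and g: "ges_wrt A p"
    using s2 by (auto simp: stmt2_def)
  obtain \<alpha> \<beta> where ab: "\<alpha> > 0" "\<beta> > 0"
    and H: "\<And>x. (\<forall>t\<ge>0. (x has_vector_derivative (A *v x t)) (at t within {0..})) \<Longrightarrow>
              (\<forall>t\<ge>0. p (x t) \<le> \<alpha> * p (x 0) * exp (- \<beta> * t))"
    using g unfolding ges_wrt_def by blast
  have pE0: "p x = 0 \<longleftrightarrow> x \<in> E" for x using pk by (auto simp: seminorm_ker_def)
  have inv: "\<forall>x\<in>E. A *v x \<in> E"
  proof
    fix x0 assume x0: "x0 \<in> E"
    obtain X where X: "rsol A X" "X 0 = x0" using rsol_exists by blast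
    have px0: "p (X 0) = 0" using X(2) x0 pE0 by simp
    have pX: "p (X t) = 0" if t: "t \<ge> 0" for t
    proof -
      have "p (X t) \<le> \<alpha> * p (X 0) * exp (-\<beta>*t)" using H[OF rsol_within[OF X(1)]] t by blast
      then have "p (X t) \<le> 0" using px0 by simp
      then show ?thesis using sn_nonneg[OF p, of "X t"] by linarith
    qed
    have z: "pE E (X t) = 0" if "t \<in> cbox 0 1" for t
    proof -
      have "t \<ge> 0" using that by (simp add: cbox_interval)
      then have "X t \<in> E" using pX pE0 by blast
      then show ?thesis by (rule pE_E[OF E])
    qed
    have d1: "((\<lambda>t. pE E (X t)) has_vector_derivative pE E (A *v X 0)) (at 0 within cbox 0 1)"
    proof -
      have "(X has_vector_derivative A *v X 0) (at 0)" using X(1) by (simp add: rsol_def)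
      then have "(X has_vector_derivative A *v X 0) (at 0 within cbox 0 1)" by (rule has_vector_derivative_at_within)
      then show ?thesis by (rule bounded_linear.has_vector_derivative[OF pE_bl])
    qed
    have d2: "((\<lambda>t. pE E (X t)) has_vector_derivative 0) (at 0 within cbox 0 1)"
    proof (rule has_vector_derivative_transform[where f = "\<lambda>t. 0"])
      show "(0::real) \<in> cbox 0 1" by (simp add: cbox_interval)
      show "\<And>x. x \<in> cbox 0 1 \<Longrightarrow> pE E (X x) = 0" by (rule z)
      show "((\<lambda>t. 0) has_vector_derivative 0) (at 0 within cbox 0 1)" by simp
    qed
    have "pE E (A *v X 0) = 0"
      by (rule vector_derivative_unique_within_closed_interval[OF _ _ d1 d2]) (auto simp: cbox_interval)
    then show "A *v x0 \<in> E" using X(2) pE_zero_iff[OF E] by simp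
  qed
  have "E_ge0 A \<subseteq> E"
  proof (rule Ege0_sub_generic[OF E])
    fix \<mu> k v assume r0: "Re \<mu> \<ge> 0" and kz: "(fm (cmat A) \<mu> ^^ Suc k) v = 0"
      and u: "fm (cmat A) \<mu> v \<in> EC E"
    have sub: "vec.subspace (EC E)" by (rule EC_subspace[OF E])
    have fj: "(fm (cmat A) \<mu> ^^ Suc j) v \<in> EC E" for j
      using EC_fmk[OF E inv u, where \<mu>=\<mu> and j=j] by (simp only: funpow_Suc_right o_apply)
    define Y where "Y = gsol A \<mu> v (Suc k)"
    have Ycs: "csol A Y" unfolding Y_def by (rule gsol_csol[OF kz])
    have Y0: "Y 0 = v" unfolding Y_def by (rule gsol_at0[OF kz])
    have Ydiff: "Y t = exp (\<mu> * of_real t) *s v + exp (\<mu> * of_real t) *s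
        (\<Sum>j<k. (t^Suc j / fact (Suc j)) *\<^sub>R (fm (cmat A) \<mu> ^^ Suc j) v)" for t
    proof -
      have "Wsum A \<mu> v (Suc k) t = v + (\<Sum>j<k. (t^Suc j / fact (Suc j)) *\<^sub>R (fm (cmat A) \<mu> ^^ Suc j) v)"
        by (simp only: Wsum_def sum.lessThan_Suc_shift) simp
      then show ?thesis by (simp only: Y_def gsol_def vector_add_ldistrib)
    qed
    have inEC: "exp (\<mu> * of_real t) *s (\<Sum>j<k. (t^Suc j / fact (Suc j)) *\<^sub>R (fm (cmat A) \<mu> ^^ Suc j) v) \<in> EC E" for t
      using fj by (intro vec.subspace_scale[OF sub] vec.subspace_sum[OF sub])
        (simp add: scaleR_smult vec.subspace_scale[OF sub])
    have qY: "qn p (Y t) \<le> \<alpha> * qn p v * exp (-\<beta> * t)" if t: "t \<ge> 0" for t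
    proof -
      have "p (rvec (Y t)) \<le> \<alpha> * p (rvec (Y 0)) * exp (-\<beta> * t)"
        using H[OF rsol_within[OF csol_rvec[OF Ycs]]] t by blast
      moreover have "p (ivec (Y t)) \<le> \<alpha> * p (ivec (Y 0)) * exp (-\<beta> * t)"
        using H[OF rsol_within[OF csol_ivec[OF Ycs]]] t by blast
      ultimately show ?thesis using Y0 by (simp add: qn_def algebra_simps)
    qed
    have qv: "qn p v \<le> 2 * \<alpha> * qn p v * exp (-\<beta> * t)" if t: "t \<ge> 0" for t
    proof -
      define e where "e = exp (\<mu> * of_real t)"
      have e0: "e \<noteq> 0" by (simp add: e_def)
      have "qn p v = qn p (inverse e *s (e *s v))" using e0 by (simp add: vector_smult_assoc)
      also have "\<dots> \<le> 2 * cmod (inverse e) * qn p (e *s v)" by (rule qn_smult_le[OF p])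
      also have "cmod (inverse e) \<le> 1"
      proof -
        have "cmod (inverse e) = exp (- (Re \<mu> * t))" by (simp add: e_def norm_inverse norm_exp_eq_Re exp_minus)
        also have "\<dots> \<le> 1" using r0 t by simp
        finally show ?thesis .
      qed
      then have "2 * cmod (inverse e) * qn p (e *s v) \<le> 2 * 1 * qn p (e *s v)"
        using sn_nonneg[OF p] by (intro mult_right_mono mult_left_mono) (auto simp: qn_def)
      also have "qn p (e *s v) = qn p (Y t)"
        using qn_EC[OF p pk inEC[of t]] Ydiff[of t] by (simp add: e_def)
      also have "2 * 1 * qn p (Y t) \<le> 2 * (\<alpha> * qn p v * exp (-\<beta> * t))" using qY[OF t] by simp
      finally show ?thesis by simp
    qed
    have q0: "qn p v \<ge> 0" using sn_nonneg[OF p] by (simp add: qn_def)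
    have "qn p v = 0"
    proof (rule ccontr)
      assume "qn p v \<noteq> 0"
      then have "qn p v > 0" using q0 by simp
      then obtain t where t: "t \<ge> 0" "2 * \<alpha> * qn p v * exp (-\<beta> * t) < qn p v"
        using exp_small[OF _ ab(2), of "qn p v" "2 * \<alpha> * qn p v"] by blast
      then show False using qv[OF t(1)] by simp
    qed
    then have "p (rvec v) = 0" "p (ivec v) = 0" using sn_nonneg[OF p, of "rvec v"] sn_nonneg[OF p, of "ivec v"]
      by (auto simp: qn_def)
    then show "v \<in> EC E" using pE0 by (simp add: EC_def)
  qed
  then show ?thesis using inv by (simp add: stmt1_def)
qed

lemma transpose_add': "transpose (P + Q) = transpose P + (transpose Q :: real^'n^'n)"
  by (simp add: transpose_def vec_eq_iff)
lemma transpose_diff': "transpose (P - Q) = transpose P - (transpose Q :: real^'n^'n)"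
  by (simp add: transpose_def vec_eq_iff)
lemma transpose_zero': "transpose (0 :: real^'n^'n) = 0"
  by (simp add: transpose_def vec_eq_iff)
lemma transpose_uminus': "transpose (- P) = - (transpose P :: real^'n^'n)"
  by (simp add: transpose_def vec_eq_iff)
lemma mat_add_rdistrib: "(P + Q) ** (A :: real^'n^'n) = P ** A + Q ** A"
  by (simp add: matrix_eq matrix_vector_mul_assoc[symmetric] matrix_vector_mult_add_rdistrib)
lemma mat_scale_l: "(c *\<^sub>R P) ** (A :: real^'n^'n) = c *\<^sub>R (P ** A)"
  by (simp add: matrix_eq matrix_vector_mul_assoc[symmetric] scaleR_matrix_vector_assoc[symmetric])
lemma uminus_mat_vec: "(- Q) *v x = - ((Q :: real^'n^'n) *v x)"
  by (simp add: matrix_vector_mult_def vec_eq_iff sum_negf)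
lemma zero_mat_vec: "(0 :: real^'n^'n) *v x = 0"
  by (simp add: matrix_vector_mult_def vec_eq_iff)

definition SE :: "(real^'n) set \<Rightarrow> (real^'n^'n) set" where
  "SE E = {P. transpose P = P \<and> (\<forall>x\<in>E. P *v x = 0)}"

definition LA :: "real^'n^'n \<Rightarrow> real^'n^'n \<Rightarrow> real^'n^'n" where
  "LA A P = transpose A ** P + P ** A"

lemma SE_subspace: "subspace (SE E)"
  unfolding subspace_def SE_def
  by (auto simp: transpose_zero' zero_mat_vec transpose_add' matrix_vector_mult_add_rdistrib
      transpose_scalar scaleR_matrix_vector_assoc[symmetric])

lemma LA_linear: "linear (LA A)"
  by (rule linearI) (simp_all add: LA_def matrix_add_ldistrib mat_add_rdistrib matrix_scalar_ac mat_scale_l scaleR_add_right)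

lemma LA_SE:
  assumes inv: "\<forall>x\<in>E. A *v x \<in> E" and P: "P \<in> SE E"
  shows "LA A P \<in> SE E"
proof -
  have Ps: "transpose P = P" "\<forall>x\<in>E. P *v x = 0" using P by (auto simp: SE_def)
  have "transpose (LA A P) = LA A P"
    by (simp add: LA_def transpose_add' matrix_transpose_mul transpose_transpose Ps(1) add.commute)
  moreover have "LA A P *v x = 0" if "x \<in> E" for x
    using that inv Ps(2)
    by (simp add: LA_def matrix_vector_mult_add_rdistrib matrix_vector_mul_assoc[symmetric])
  ultimately show ?thesis by (simp add: SE_def)
qed

lemma V_deriv:
  assumes X: "rsol A X" and Ps: "transpose P = P"
  shows "((\<lambda>t. X t \<bullet> (P *v X t)) has_real_derivative (X t \<bullet> (LA A P *v X t))) (at t)"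
proof -
  have dX: "(X has_vector_derivative A *v X t) (at t)" using X by (simp add: rsol_def)
  have dPX: "((\<lambda>t. P *v X t) has_vector_derivative P *v (A *v X t)) (at t)"
    by (rule bounded_linear.has_vector_derivative[OF matrix_vector_mul_bounded_linear dX])
  have "((\<lambda>t. X t \<bullet> (P *v X t)) has_vector_derivative (X t \<bullet> (P *v (A *v X t)) + (A *v X t) \<bullet> (P *v X t))) (at t)"
    by (rule bounded_bilinear.has_vector_derivative[OF bounded_bilinear_inner dX dPX])
  moreover have "X t \<bullet> (P *v (A *v X t)) + (A *v X t) \<bullet> (P *v X t) = X t \<bullet> (LA A P *v X t)"
  proof -
    have "LA A P *v X t = transpose A *v (P *v X t) + P *v (A *v X t)"
      by (simp only: LA_def matrix_vector_mult_add_rdistrib matrix_vector_mul_assoc[symmetric])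
    then show ?thesis by (simp only: inner_add_right dot_transpose add.commute)
  qed
  ultimately show ?thesis by (simp add: has_real_derivative_iff_has_vector_derivative)
qed

lemma V_bound:
  assumes E: "subspace E" and P: "P \<in> SE E"
  shows "\<bar>y \<bullet> (P *v y)\<bar> \<le> onorm ((*v) P) * (norm (pE E y))^2"
proof -
  have Ps: "transpose P = P" "\<forall>x\<in>E. P *v x = 0" using P by (auto simp: SE_def)
  define w where "w = pE E y"
  define e where "e = y - pE E y"
  have e: "e \<in> E" unfolding e_def by (rule proj_in[OF E])
  have y: "y = w + e" by (simp add: w_def e_def)
  have Pe: "P *v e = 0" using Ps(2) e by blast
  have ePw: "e \<bullet> (P *v w) = 0" using sym_dot[OF Ps(1), of e w] Pe by simp
  have "y \<bullet> (P *v y) = w \<bullet> (P *v w)"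
    unfolding y by (simp add: matrix_vector_right_distrib Pe inner_add_left ePw)
  also have "\<bar>\<dots>\<bar> \<le> norm w * norm (P *v w)" by (rule Cauchy_Schwarz_ineq2)
  also have "\<dots> \<le> norm w * (onorm ((*v) P) * norm w)"
    by (intro mult_left_mono onorm[OF matrix_vector_mul_bounded_linear]) simp
  also have "\<dots> = onorm ((*v) P) * (norm (pE E y))^2" by (simp add: w_def power2_eq_square)
  finally show ?thesis .
qed

lemma V_decay:
  assumes E: "subspace E" and ge: "E_ge0 A \<subseteq> E" and P: "P \<in> SE E"
  shows "\<exists>X M \<gamma>. rsol A X \<and> X 0 = x0 \<and> \<gamma> > 0 \<and> (\<forall>t\<ge>0. \<bar>X t \<bullet> (P *v X t)\<bar> \<le> M * exp (-\<gamma> * t))"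
proof -
  obtain K \<beta> where Kb: "K \<ge> 0" "\<beta> > 0"
    "\<And>z. \<exists>X. rsol A X \<and> X 0 = z \<and> (\<forall>t\<ge>0. norm (pE E (X t)) \<le> K * norm z * exp (-\<beta>*t))"
    using uniform_decay[OF E ge] by blast
  obtain X where X: "rsol A X" "X 0 = x0" "\<forall>t\<ge>0. norm (pE E (X t)) \<le> K * norm x0 * exp (-\<beta>*t)"
    using Kb(3) by blast
  define M where "M = onorm ((*v) P) * (K * norm x0)^2"
  have "\<bar>X t \<bullet> (P *v X t)\<bar> \<le> M * exp (-(2*\<beta>) * t)" if t: "t \<ge> 0" for t
  proof -
    have "\<bar>X t \<bullet> (P *v X t)\<bar> \<le> onorm ((*v) P) * (norm (pE E (X t)))^2" by (rule V_bound[OF E P])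
    also have "\<dots> \<le> onorm ((*v) P) * (K * norm x0 * exp (-\<beta>*t))^2"
      using X(3) t by (intro mult_left_mono power_mono onorm_pos_le[OF matrix_vector_mul_bounded_linear]) auto
    also have "(K * norm x0 * exp (-\<beta>*t))^2 = (K * norm x0)^2 * exp (-(2*\<beta>) * t)"
    proof -
      have "exp (-\<beta>*t) * exp (-\<beta>*t) = exp (-(2*\<beta>) * t)" by (simp flip: exp_add)
      then show ?thesis by (simp add: power2_eq_square algebra_simps)
    qed
    finally show ?thesis by (simp add: M_def mult.assoc)
  qed
  moreover have "2 * \<beta> > 0" using Kb(2) by simp
  ultimately show ?thesis using X(1,2) by blast
qed

lemma LA_inj:
  assumes E: "subspace E" and ge: "E_ge0 A \<subseteq> E" and P: "P \<in> SE E" and L0: "LA A P = 0"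
  shows "P = 0"
proof -
  have Ps: "transpose P = P" using P by (simp add: SE_def)
  have V0: "x0 \<bullet> (P *v x0) = 0" for x0
  proof -
    obtain X M \<gamma> where X: "rsol A X" "X 0 = x0" "\<gamma> > 0" "\<forall>t\<ge>0. \<bar>X t \<bullet> (P *v X t)\<bar> \<le> M * exp (-\<gamma> * t)"
      using V_decay[OF E ge P] by blast
    have const: "X t \<bullet> (P *v X t) = X 0 \<bullet> (P *v X 0)" for t
      using V_deriv[OF X(1) Ps] L0 by (intro DERIV_isconst_all) (simp add: zero_mat_vec)
    show ?thesis
    proof (rule ccontr)
      assume ne: "x0 \<bullet> (P *v x0) \<noteq> 0"
      obtain t where t: "t \<ge> 0" "M * exp (-\<gamma> * t) < \<bar>x0 \<bullet> (P *v x0)\<bar>"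
        using exp_small[OF _ X(3)] ne by (metis zero_less_abs_iff)
      then show False using X(4) const[of t] X(2) by fastforce
    qed
  qed
  have "P *v y = 0" for y
  proof -
    have "(x + y) \<bullet> (P *v (x + y)) = x \<bullet> (P *v x) + 2 * (x \<bullet> (P *v y)) + y \<bullet> (P *v y)" for x
      using sym_dot[OF Ps, of y x]
      by (simp add: matrix_vector_right_distrib inner_add_left inner_add_right inner_commute)
    then have "x \<bullet> (P *v y) = 0" for x using V0 by (metis add_0 mult_eq_0_iff zero_neq_numeral add_0_right)
    then show ?thesis by (metis inner_eq_zero_iff)
  qed
  then show ?thesis by (simp add: matrix_eq zero_mat_vec)
qed

lemma LA_surj:
  assumes E: "subspace E" and inv: "\<forall>x\<in>E. A *v x \<in> E" and ge: "E_ge0 A \<subseteq> E" and R: "R \<in> SE E"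
  shows "\<exists>P\<in>SE E. LA A P = R"
proof -
  let ?S = "SE E"
  let ?f = "LA A"
  have sub: "subspace ?S" by (rule SE_subspace)
  have img: "?f ` ?S \<subseteq> ?S" using LA_SE[OF inv] by blast
  have inj: "inj_on ?f ?S"
  proof (rule inj_onI)
    fix P1 P2 assume P1: "P1 \<in> ?S" and P2: "P2 \<in> ?S" and eq: "?f P1 = ?f P2"
    have "P1 - P2 \<in> ?S" using sub P1 P2 by (rule subspace_diff)
    moreover have "?f (P1 - P2) = ?f P1 - ?f P2" by (rule linear_diff[OF LA_linear])
    then have "?f (P1 - P2) = 0" using eq by simp
    ultimately have "P1 - P2 = 0" by (rule LA_inj[OF E ge])
    then show "P1 = P2" by simp
  qed
  have "dim (?f ` ?S) = dim ?S"
    using inj sub by (intro eucl.dim_image_eq[OF LA_linear]) (simp add: span_eq_iff[THEN iffD2, OF sub])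
  then have "?f ` ?S = ?S"
    by (intro subspace_dim_equal linear_subspace_image[OF LA_linear sub] sub img) simp
  then show ?thesis using R by (metis imageE)
qed

lemma stmt1_stmt5:
  assumes E: "subspace E" and s1: "stmt1 A E"
  shows "stmt5 A E"
proof -
  have inv: "\<forall>x\<in>E. A *v x \<in> E" and ge: "E_ge0 A \<subseteq> E" using s1 by (auto simp: stmt1_def)
  have psd_SE: "P \<in> psd_ker E \<Longrightarrow> P \<in> SE E" for P by (auto simp: psd_ker_def SE_def)
  show ?thesis unfolding stmt5_def
  proof
    fix Q assume Q: "Q \<in> psd_ker E"
    have Qs: "transpose Q = Q" "\<forall>x. 0 \<le> x \<bullet> (Q *v x)" "{x. Q *v x = 0} = E" using Q by (auto simp: psd_ker_def)
    have mQ: "- Q \<in> SE E" using psd_SE[OF Q] subspace_neg[OF SE_subspace] by blast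
    obtain P where P: "P \<in> SE E" and LP: "LA A P = - Q" using LA_surj[OF E inv ge mQ] by blast
    have Ps: "transpose P = P" "\<forall>x\<in>E. P *v x = 0" using P by (auto simp: SE_def)
    have psd: "0 \<le> x0 \<bullet> (P *v x0)" for x0
    proof -
      obtain X M \<gamma> where X: "rsol A X" "X 0 = x0" "\<gamma> > 0" "\<forall>t\<ge>0. \<bar>X t \<bullet> (P *v X t)\<bar> \<le> M * exp (-\<gamma> * t)"
        using V_decay[OF E ge P] by blast
      have dec: "X t \<bullet> (P *v X t) \<le> X 0 \<bullet> (P *v X 0)" if t: "t \<ge> 0" for t
      proof (rule DERIV_nonpos_imp_decreasing_open[OF t])
        fix s
        have "X s \<bullet> (LA A P *v X s) \<le> 0" using Qs(2) by (simp add: LP uminus_mat_vec)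
        then show "\<exists>y. ((\<lambda>t. X t \<bullet> (P *v X t)) has_real_derivative y) (at s) \<and> y \<le> 0"
          using V_deriv[OF X(1) Ps(1)] by blast
      next
        show "continuous_on {0..t} (\<lambda>t. X t \<bullet> (P *v X t))"
          by (rule DERIV_continuous_on[OF DERIV_subset[OF V_deriv[OF X(1) Ps(1)]]]) auto
      qed
      show ?thesis
      proof (rule ccontr)
        assume "\<not> 0 \<le> x0 \<bullet> (P *v x0)"
        then have neg: "0 < - (x0 \<bullet> (P *v x0))" by simp
        obtain t where t: "t \<ge> 0" "M * exp (-\<gamma> * t) < - (x0 \<bullet> (P *v x0))"
          using exp_small[OF neg X(3)] by blast
        have "- (X t \<bullet> (P *v X t)) \<le> M * exp (-\<gamma> * t)" using X(4) t(1) by fastforce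
        moreover have "X t \<bullet> (P *v X t) \<le> x0 \<bullet> (P *v x0)" using dec[OF t(1)] X(2) by simp
        ultimately show False using t(2) by linarith
      qed
    qed
    have eqn: "transpose A ** P + P ** A + Q = 0" using LP by (simp add: LA_def)
    have ker: "{x. P *v x = 0} = E"
    proof
      show "E \<subseteq> {x. P *v x = 0}" using Ps(2) by blast
      show "{x. P *v x = 0} \<subseteq> E"
      proof
        fix x assume "x \<in> {x. P *v x = 0}"
        then have Px: "P *v x = 0" by simp
        have "(transpose A ** P + P ** A + Q) *v x = 0" using eqn by (simp add: zero_mat_vec)
        then have k: "transpose A *v (P *v x) + P *v (A *v x) + Q *v x = 0"
          by (simp add: matrix_vector_mult_add_rdistrib matrix_vector_mul_assoc[symmetric])
        have "x \<bullet> (P *v (A *v x)) = 0" using sym_dot[OF Ps(1), of x "A *v x"] Px by simp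
        then have "x \<bullet> (Q *v x) = 0" using k Px by (metis add_0 inner_add_right inner_zero_right matrix_vector_mult_0_right)
        then have "Q *v x = 0" by (rule psd_zero[OF Qs(1) Qs(2)])
        then show "x \<in> E" using Qs(3) by blast
      qed
    qed
    have PP: "P \<in> psd_ker E" using Ps(1) psd ker by (simp add: psd_ker_def)
    show "\<exists>!P. P \<in> psd_ker E \<and> transpose A ** P + P ** A + Q = 0"
    proof (rule ex1I[of _ P])
      show "P \<in> psd_ker E \<and> transpose A ** P + P ** A + Q = 0" using PP eqn by blast
      fix P' assume P': "P' \<in> psd_ker E \<and> transpose A ** P' + P' ** A + Q = 0"
      have "P' - P \<in> SE E" using psd_SE P' P by (intro subspace_diff[OF SE_subspace]) auto
      moreover have "LA A (P' - P) = 0"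
      proof -
        have L': "LA A P' = - Q" using P' by (simp add: LA_def eq_neg_iff_add_eq_0)
        have "LA A (P' - P) = LA A P' - LA A P" by (rule linear_diff[OF LA_linear])
        then show ?thesis using L' LP by simp
      qed
      ultimately have "P' - P = 0" by (rule LA_inj[OF E ge])
      then show "P' = P" by simp
    qed
  qed
qed

lemma stmt1_stmt3: "subspace E \<Longrightarrow> stmt1 A E \<Longrightarrow> stmt3 A E"
  unfolding stmt3_def stmt1_def using stmt1_ges by blast

lemma seminorm_pE:
  assumes E: "subspace E"
  shows "seminorm (\<lambda>x. norm (pE E x))" "seminorm_ker (\<lambda>x. norm (pE E x)) = E"
proof -
  show "seminorm (\<lambda>x. norm (pE E x))"
    unfolding seminorm_def
    by (auto simp: pE_scale pE_add norm_triangle_ineq)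
  show "seminorm_ker (\<lambda>x. norm (pE E x)) = E"
    by (auto simp: seminorm_ker_def pE_zero_iff[OF E])
qed

lemma stmt3_stmt2: "subspace E \<Longrightarrow> stmt3 A E \<Longrightarrow> stmt2 A E"
  unfolding stmt3_def stmt2_def using seminorm_pE by blast

lemma stmt5_stmt4: "subspace E \<Longrightarrow> stmt5 A E \<Longrightarrow> stmt4 A E"
  unfolding stmt5_def stmt4_def using Qm_psd_ker by blast

lemma all_equiv:
  assumes E: "subspace E"
  shows "(stmt1 A E \<longleftrightarrow> stmt2 A E) \<and> (stmt1 A E \<longleftrightarrow> stmt3 A E) \<and>
         (stmt1 A E \<longleftrightarrow> stmt4 A E) \<and> (stmt1 A E \<longleftrightarrow> stmt5 A E)"
  using stmt1_stmt3[OF E] stmt3_stmt2[OF E] stmt2_stmt1[OF E] stmt1_stmt5[OF E]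
    stmt5_stmt4[OF E] stmt4_stmt1[OF E]
  by blast

theorem theorem3:
  fixes A :: "real^'n^'n"
  shows "(\<forall>E :: (real^'n) set. subspace E \<longrightarrow>
            (stmt1 A E \<longleftrightarrow> stmt2 A E) \<and> (stmt1 A E \<longleftrightarrow> stmt3 A E) \<and>
            (stmt1 A E \<longleftrightarrow> stmt4 A E) \<and> (stmt1 A E \<longleftrightarrow> stmt5 A E))
   \<and> subspace (E_ge0 A)
   \<and> stmt1 A (E_ge0 A) \<and> stmt2 A (E_ge0 A) \<and> stmt3 A (E_ge0 A) \<and> stmt4 A (E_ge0 A) \<and> stmt5 A (E_ge0 A)
   \<and> (\<forall>E. subspace E \<and> (stmt1 A E \<or> stmt2 A E \<or> stmt3 A E \<or> stmt4 A E \<or> stmt5 A E)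
          \<longrightarrow> E_ge0 A \<subseteq> E)"
proof -
  have S: "subspace (E_ge0 A)" by (rule E_ge0_subspace)
  have s1: "stmt1 A (E_ge0 A)" unfolding stmt1_def using E_ge0_inv by blast
  have last: "E_ge0 A \<subseteq> E" if "subspace E" "stmt1 A E \<or> stmt2 A E \<or> stmt3 A E \<or> stmt4 A E \<or> stmt5 A E" for E
  proof -
    have "stmt1 A E" using all_equiv[OF that(1), of A] that(2) by blast
    then show ?thesis by (simp add: stmt1_def)
  qed
  show ?thesis using all_equiv S s1 all_equiv[OF S, of A] last by blast
qed

end
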